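(* In the setting of the context, with $\varepsilon_0<1$, $0<\varepsilon\le\varepsilon_0$, and under (A1), (A2) and $\Delta t\ge\varepsilon$, the solutions $\bar v^{n+1}\in H_0^1(\Omega)$ of $a(\bar v^{n+1},\varphi)=\iota_h(\varphi)$ for all $\varphi\in H_0^1(\Omega)$ and $v_h^{n+1}\in V_h$ of $a(v_h^{n+1},\varphi_h)=\iota_h(\varphi_h)$ for all $\varphi_h\in V_h$ satisfy $$\|\bar v^{n+1}-v_h^{n+1}\|_{H_0^1}=O\Big(\frac{\varepsilon^6}{\Delta x^3}+\frac{\varepsilon^4}{\Delta x}+\varepsilon^2\Delta t\Big).$$
   Context: $\|\varphi\|_{H_0^1}=\|\varphi_x\|_{L^2}$. $\Omega=[0,1]$; $(v,u)$ solves $v_t-u_x=0$, $u_t-\varepsilon^{-2}v_x=g$ on $\Omega\times\mathbb{R}^+$ with $v=0$ on $\partial\Omega$. $\gamma=\Delta t^2(1-\varepsilon)^2/\varepsilon^2$, $a(v,\varphi)=\int_\Omega(\gamma v_x\varphi_x+v\varphi)dx$. $t^n=n\Delta t$. Uniform mesh $\Omega_i=[x_i,x_{i+1}]$, width $\Delta x$, midpoints $\bar x_i$, $v_i^n=v(\bar x_i,t^n)$, $u_i^n=u(\bar x_i,t^n)$, $g_i^n=g(\bar x_i,t^n)$; on $\Omega_i$: $\tilde v^n_x=\frac1{2\Delta x}\big(v^n_{i+1}-v^n_{i-1}+\frac{\Delta x}{\Delta t}(u^n_{i+1}+u^n_{i-1}-2u^n_i)\big)$, $\tilde u^n_x=\frac1{2\Delta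 x}\big(u^n_{i+1}-u^n_{i-1}+\frac{\Delta x}{\Delta t}(v^n_{i+1}+v^n_{i-1}-2v^n_i)\big)$, $\iota_{1,h}=v_i^n+\Delta t\,\tilde u^n_x$, $\iota_{2,h}=g_i^n+\varepsilon^{-1}\tilde v^n_x$; $\iota_h(\varphi)=\int_\Omega\iota_{1,h}\varphi-\Delta t^2(1-\varepsilon)\iota_{2,h}\varphi_x\,dx$. $V_h$: continuous piecewise linear functions on the mesh vanishing at $0$ and $1$. (A1) $u,v$ sufficiently smooth with $v=\varepsilon^2v^{(2)}+O(\varepsilon^3)$, $u_x=\varepsilon^2u^{(2)}_x+O(\varepsilon^3)$ in the norm $\|\varphi\|_{C^1}=\|\varphi\|_\infty+\|\nabla_{x,t}\varphi\|_\infty$, with $\varepsilon$-independent smooth $v^{(2)},u^{(2)}$. (A2) $\Delta t=\widehat{\mathrm{CFL}}\,\Delta x$, fixed $0<\widehat{\mathrm{CFL}}<1$. $O(\cdot)$: bounded by a constant independent of $\varepsilon,\Delta t,\Delta x$ times the expression. *)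

theory Defs
  imports "HOL-Analysis.Analysis"
begin

definition partial_x :: "(real \<Rightarrow> real \<Rightarrow> real) \<Rightarrow> real \<Rightarrow> real \<Rightarrow> real" where
  "partial_x f = (\<lambda>x t. deriv (\<lambda>y. f y t) x)"

definition partial_t :: "(real \<Rightarrow> real \<Rightarrow> real) \<Rightarrow> real \<Rightarrow> real \<Rightarrow> real" where
  "partial_t f = (\<lambda>x t. deriv (\<lambda>s. f x s) t)"

definition smooth2 :: "(real \<Rightarrow> real \<Rightarrow> real) \<Rightarrow> bool" where
  "smooth2 f \<longleftrightarrow> (\<forall>j k. let h = (partial_x ^^ j) ((partial_t ^^ k) f) in
      (\<forall>x t. (\<lambda>y. h y t) differentiable (at x) \<and> (\<lambda>s. h x s) differentiable (at t)) \<and>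
      continuous_on UNIV (\<lambda>p. h (fst p) (snd p)))"

definition bounded_smooth2 :: "(real \<Rightarrow> real \<Rightarrow> real) \<Rightarrow> bool" where
  "bounded_smooth2 f \<longleftrightarrow> smooth2 f \<and>
     (\<forall>j k. \<exists>B. \<forall>x. \<forall>t\<ge>0. \<bar>((partial_x ^^ j) ((partial_t ^^ k) f)) x t\<bar> \<le> B)"

definition C1_norm_le :: "(real \<Rightarrow> real \<Rightarrow> real) \<Rightarrow> real \<Rightarrow> bool" where
  "C1_norm_le f M \<longleftrightarrow> (\<exists>a b. a + b \<le> M \<and>
     (\<forall>x. \<forall>t\<ge>0. \<bar>f x t\<bar> \<le> a) \<and>
     (\<forall>x. \<forall>t\<ge>0. sqrt ((partial_x f x t)\<^sup>2 + (partial_t f x t)\<^sup>2) \<le> b))"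

text \<open>phi in H_0^1(0,1) with weak derivative dphi (in L^2(0,1)).\<close>
definition H01_pair :: "(real \<Rightarrow> real) \<Rightarrow> (real \<Rightarrow> real) \<Rightarrow> bool" where
  "H01_pair \<phi> d\<phi> \<longleftrightarrow> set_borel_measurable lborel {0..1} d\<phi> \<and>
     set_integrable lborel {0..1} (\<lambda>x. (d\<phi> x)\<^sup>2) \<and>
     (\<forall>x\<in>{0..1}. \<phi> x = (LINT y:{0..x}|lborel. d\<phi> y)) \<and> \<phi> 1 = 0"

definition H01_norm :: "(real \<Rightarrow> real) \<Rightarrow> real" where
  "H01_norm d\<phi> = sqrt (LINT x:{0..1}|lborel. (d\<phi> x)\<^sup>2)"

definition Vh :: "nat \<Rightarrow> (real \<Rightarrow> real) \<Rightarrow> bool" where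
  "Vh N \<phi> \<longleftrightarrow> (\<exists>c :: nat \<Rightarrow> real. c 0 = 0 \<and> c N = 0 \<and>
     (\<forall>i<N. \<forall>x\<in>{real i / real N .. real (Suc i) / real N}.
        \<phi> x = c i + (c (Suc i) - c i) * (real N * x - real i)))"

definition gamma_coef :: "real \<Rightarrow> real \<Rightarrow> real" where
  "gamma_coef \<epsilon> dt = dt\<^sup>2 * (1 - \<epsilon>)\<^sup>2 / \<epsilon>\<^sup>2"

definition a_form :: "real \<Rightarrow> real \<Rightarrow> (real \<Rightarrow> real) \<Rightarrow> (real \<Rightarrow> real)
    \<Rightarrow> (real \<Rightarrow> real) \<Rightarrow> (real \<Rightarrow> real) \<Rightarrow> real" where
  "a_form \<epsilon> dt w dw \<phi> d\<phi> =
     (LINT x:{0..1}|lborel. gamma_coef \<epsilon> dt * dw x * d\<phi> x + w x * \<phi> x)"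

text \<open>cell midpoints xbar_i = (i + 1/2) dx, i an integer (i = -1, N are ghost cells)\<close>
definition xbar :: "real \<Rightarrow> int \<Rightarrow> real" where
  "xbar dx i = (real_of_int i + 1/2) * dx"

definition cell :: "real \<Rightarrow> real \<Rightarrow> int" where
  "cell dx x = \<lfloor>x / dx\<rfloor>"

definition tilde_vx :: "(real \<Rightarrow> real \<Rightarrow> real) \<Rightarrow> (real \<Rightarrow> real \<Rightarrow> real)
    \<Rightarrow> real \<Rightarrow> real \<Rightarrow> nat \<Rightarrow> int \<Rightarrow> real" where
  "tilde_vx v u dx dt n i = (let V = (\<lambda>j. v (xbar dx j) (real n * dt));
       U = (\<lambda>j. u (xbar dx j) (real n * dt)) in
     (V (i+1) - V (i-1) + dx / dt * (U (i+1) + U (i-1) - 2 * U i)) / (2 * dx))"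

definition tilde_ux :: "(real \<Rightarrow> real \<Rightarrow> real) \<Rightarrow> (real \<Rightarrow> real \<Rightarrow> real)
    \<Rightarrow> real \<Rightarrow> real \<Rightarrow> nat \<Rightarrow> int \<Rightarrow> real" where
  "tilde_ux v u dx dt n i = (let V = (\<lambda>j. v (xbar dx j) (real n * dt));
       U = (\<lambda>j. u (xbar dx j) (real n * dt)) in
     (U (i+1) - U (i-1) + dx / dt * (V (i+1) + V (i-1) - 2 * V i)) / (2 * dx))"

definition iota1 :: "(real \<Rightarrow> real \<Rightarrow> real) \<Rightarrow> (real \<Rightarrow> real \<Rightarrow> real)
    \<Rightarrow> real \<Rightarrow> real \<Rightarrow> nat \<Rightarrow> real \<Rightarrow> real" where
  "iota1 v u dx dt n x = (let i = cell dx x in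
     v (xbar dx i) (real n * dt) + dt * tilde_ux v u dx dt n i)"

definition iota2 :: "(real \<Rightarrow> real \<Rightarrow> real) \<Rightarrow> (real \<Rightarrow> real \<Rightarrow> real) \<Rightarrow> (real \<Rightarrow> real \<Rightarrow> real)
    \<Rightarrow> real \<Rightarrow> real \<Rightarrow> real \<Rightarrow> nat \<Rightarrow> real \<Rightarrow> real" where
  "iota2 v u g \<epsilon> dx dt n x = (let i = cell dx x in
     g (xbar dx i) (real n * dt) + tilde_vx v u dx dt n i / \<epsilon>)"

definition iota_h :: "(real \<Rightarrow> real \<Rightarrow> real) \<Rightarrow> (real \<Rightarrow> real \<Rightarrow> real) \<Rightarrow> (real \<Rightarrow> real \<Rightarrow> real)
    \<Rightarrow> real \<Rightarrow> real \<Rightarrow> real \<Rightarrow> nat \<Rightarrow> (real \<Rightarrow> real) \<Rightarrow> (real \<Rightarrow> real) \<Rightarrow> real" where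
  "iota_h v u g \<epsilon> dx dt n \<phi> d\<phi> =
     (LINT x:{0..1}|lborel. iota1 v u dx dt n x * \<phi> x
        - dt\<^sup>2 * (1 - \<epsilon>) * iota2 v u g \<epsilon> dx dt n x * d\<phi> x)"

end

theory Submission
  imports Defs
begin


definition kidx :: "nat \<Rightarrow> real \<Rightarrow> nat" where
  "kidx N x = nat \<lfloor>real N * x\<rfloor>"

definition pl :: "(nat \<Rightarrow> real) \<Rightarrow> nat \<Rightarrow> real \<Rightarrow> real" where
  "pl c N x = c (kidx N x) + (c (Suc (kidx N x)) - c (kidx N x)) * (real N * x - real (kidx N x))"

definition slope :: "(nat \<Rightarrow> real) \<Rightarrow> nat \<Rightarrow> real \<Rightarrow> real" where
  "slope c N x = real N * (c (Suc (kidx N x)) - c (kidx N x))"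

lemma kidx_eq:
  assumes "0 < N" "real j / real N \<le> x" "x < real (Suc j) / real N"
  shows "kidx N x = j"
proof -
  have "real j \<le> real N * x" "real N * x < real j + 1"
    using assms by (auto simp: field_simps)
  then have "\<lfloor>real N * x\<rfloor> = int j" by (simp add: floor_eq_iff)
  then show ?thesis by (simp add: kidx_def)
qed

lemma kidx_node: "0 < N \<Longrightarrow> kidx N (real j / real N) = j"
  by (rule kidx_eq) (auto simp: field_simps)

lemma kidx_bounds:
  assumes "0 < N" "0 \<le> x"
  shows "real (kidx N x) / real N \<le> x" "x < real (Suc (kidx N x)) / real N"
proof -
  have "0 \<le> real N * x" using assms by simp
  then have k: "real (kidx N x) = of_int \<lfloor>real N * x\<rfloor>" by (simp add: kidx_def)
  have "of_int \<lfloor>real N * x\<rfloor> \<le> real N * x" "real N * x < of_int \<lfloor>real N * x\<rfloor> + 1"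
    by linarith+
  then show "real (kidx N x) / real N \<le> x" "x < real (Suc (kidx N x)) / real N"
    using assms k by (auto simp: field_simps)
qed

lemma pl_node: "0 < N \<Longrightarrow> pl c N (real j / real N) = c j"
  by (simp add: pl_def kidx_node)

lemma slope_cell_int:
  assumes N: "0 < N" and x: "real j / real N \<le> x" "x \<le> real (Suc j) / real N"
  shows "(slope c N has_integral (x - real j / real N) * (real N * (c (Suc j) - c j))) {real j / real N..x}"
proof (rule has_integral_spike_finite[where S="{real (Suc j) / real N}"])
  show "((\<lambda>_. real N * (c (Suc j) - c j)) has_integral (x - real j / real N) * (real N * (c (Suc j) - c j))) {real j / real N..x}"
    using has_integral_const_real[of "real N * (c (Suc j) - c j)" "real j / real N" x] x by simp
  fix y assume "y \<in> {real j / real N..x} - {real (Suc j) / real N}"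
  then have "real j / real N \<le> y" "y < real (Suc j) / real N" using x by auto
  then show "slope c N y = real N * (c (Suc j) - c j)"
    using kidx_eq[OF N] by (simp add: slope_def)
qed auto

lemma slope_node_int:
  assumes N: "0 < N"
  shows "(slope c N has_integral (c j - c 0)) {0..real j / real N}"
proof (induction j)
  case 0
  then show ?case by auto
next
  case (Suc j)
  have "(slope c N has_integral (real (Suc j) / real N - real j / real N) * (real N * (c (Suc j) - c j)))
      {real j / real N..real (Suc j) / real N}"
    by (rule slope_cell_int[OF N]) (auto simp: divide_right_mono)
  moreover have "(real (Suc j) / real N - real j / real N) * (real N * (c (Suc j) - c j)) = c (Suc j) - c j"
    using N by (simp add: field_simps)
  ultimately have "(slope c N has_integral (c (Suc j) - c j)) {real j / real N..real (Suc j) / real N}" by (simp only:)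
  from has_integral_combine[OF _ _ Suc this] show ?case
    using N by (simp add: field_simps)
qed

lemma slope_pl_int:
  assumes N: "0 < N" and x: "0 \<le> x"
  shows "(slope c N has_integral (pl c N x - c 0)) {0..x}"
proof -
  let ?k = "kidx N x"
  note kb = kidx_bounds[OF N x]
  have a: "(slope c N has_integral (c ?k - c 0)) {0..real ?k / real N}" by (rule slope_node_int[OF N])
  have b: "(slope c N has_integral (x - real ?k / real N) * (real N * (c (Suc ?k) - c ?k))) {real ?k / real N..x}"
    using kb by (intro slope_cell_int[OF N]) auto
  have "(slope c N has_integral (c ?k - c 0) + (x - real ?k / real N) * (real N * (c (Suc ?k) - c ?k))) {0..x}"
    by (rule has_integral_combine[OF _ _ a b]) (use kb in auto)
  moreover have "(c ?k - c 0) + (x - real ?k / real N) * (real N * (c (Suc ?k) - c ?k)) = pl c N x - c 0"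
    using N by (simp add: pl_def field_simps)
  ultimately show ?thesis by simp
qed

lemma Vh_pl:
  assumes "Vh N \<phi>" "0 < N"
  shows "\<exists>c. c 0 = 0 \<and> c N = 0 \<and> (\<forall>x\<in>{0..1}. \<phi> x = pl c N x)"
proof -
  obtain c where c: "c 0 = 0" "c N = 0"
    "\<And>i x. i < N \<Longrightarrow> x \<in> {real i / real N .. real (Suc i) / real N} \<Longrightarrow> \<phi> x = c i + (c (Suc i) - c i) * (real N * x - real i)"
    using assms(1) unfolding Vh_def by blast
  have "\<phi> x = pl c N x" if x: "x \<in> {0..1}" for x
  proof (cases "x = 1")
    case True
    have "kidx N 1 = N" using kidx_node[OF assms(2), of N] assms(2) by simp
    moreover have "\<phi> 1 = c (Suc (N - 1)) + 0"
      using c(3)[of "N - 1" 1] assms(2) by (simp add: field_simps of_nat_diff)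
    ultimately show ?thesis using True assms(2) by (simp add: pl_def)
  next
    case False
    note kb = kidx_bounds[OF assms(2), of x]
    have "kidx N x < N"
    proof -
      have "x < 1" using x False by auto
      then have "real N * x < real N" using assms(2) by simp
      then have "\<lfloor>real N * x\<rfloor> < int N" by linarith
      moreover have "0 \<le> \<lfloor>real N * x\<rfloor>" using x by simp
      ultimately show ?thesis unfolding kidx_def by (simp add: nat_less_iff)
    qed
    then show ?thesis using c(3)[of "kidx N x" x] kb x by (auto simp: pl_def)
  qed
  with c show ?thesis by blast
qed

lemma pl_Vh:
  assumes "0 < N" "c 0 = 0" "c N = 0" "\<And>x. x \<in> {0..1} \<Longrightarrow> \<phi> x = pl c N x"
  shows "Vh N \<phi>"
  unfolding Vh_def
proof (intro exI[of _ c] conjI allI impI ballI)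
  fix i x assume i: "i < N" and x: "x \<in> {real i / real N..real (Suc i) / real N}"
  have x01: "x \<in> {0..1}"
  proof -
    have "real (Suc i) / real N \<le> 1" using i assms(1) by (simp add: field_simps)
    moreover have "0 \<le> real i / real N" by simp
    moreover have "real i / real N \<le> x" "x \<le> real (Suc i) / real N" using x by auto
    ultimately have "0 \<le> x" "x \<le> 1" by linarith+
    then show ?thesis by auto
  qed
  show "\<phi> x = c i + (c (Suc i) - c i) * (real N * x - real i)"
  proof (cases "x = real (Suc i) / real N")
    case True
    then show ?thesis using assms(4)[OF x01] pl_node[OF assms(1), of c "Suc i"] assms(1) by simp
  next
    case False
    then have "kidx N x = i" using x by (intro kidx_eq[OF assms(1)]) auto
    then show ?thesis using assms(4)[OF x01] by (simp add: pl_def)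
  qed
qed (use assms in auto)


lemma integral_cmult_real: "integral S (\<lambda>x. c * f x) = c * integral S (f :: real \<Rightarrow> real)"
  using integral_cmul[where c=c and f=f and S=S] by simp

lemma integrable_cmult_real: "f integrable_on S \<Longrightarrow> (\<lambda>x. c * f x) integrable_on S"
  for f :: "real \<Rightarrow> real"
  using integrable_cmul[where c=c and f=f and S=S] by simp

lemma split_cells_aux:
  fixes F :: "real \<Rightarrow> real"
  assumes N: "0 < N" and F: "F integrable_on {0..1}" and m: "m \<le> N"
  shows "integral {0..real m / real N} F = (\<Sum>j<m. integral {real j / real N..real (Suc j) / real N} F)"
  using m
proof (induction m)
  case 0
  then show ?case by simp
next
  case (Suc m)
  have le1: "real (Suc m) / real N \<le> 1" using Suc.prems N by (simp add: field_simps)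
  have Fi: "F integrable_on {0..real (Suc m) / real N}"
    by (rule Henstock_Kurzweil_Integration.integrable_on_subinterval[OF F]) (use le1 in auto)
  have "integral {0..real m / real N} F + integral {real m / real N..real (Suc m) / real N} F
      = integral {0..real (Suc m) / real N} F"
    by (rule Henstock_Kurzweil_Integration.integral_combine[OF _ _ Fi]) (auto simp: divide_right_mono)
  then show ?case using Suc by simp
qed

lemma split_cells:
  fixes F :: "real \<Rightarrow> real"
  assumes N: "0 < N" and F: "F integrable_on {0..1}"
  shows "integral {0..1} F = (\<Sum>j<N. integral {real j / real N..real (Suc j) / real N} F)"
  using split_cells_aux[OF N F, of N] N by simp

lemma cell_sub:
  assumes N: "0 < N" and j: "j < N"
  shows "{real j / real N..real (Suc j) / real N} \<subseteq> {0..1}"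
proof -
  have "real (Suc j) / real N \<le> 1" using j N by (simp add: field_simps)
  moreover have "0 \<le> real j / real N" by simp
  ultimately show ?thesis by auto
qed

lemma cell_increment:
  fixes d :: "real \<Rightarrow> real"
  assumes N: "0 < N" and j: "j < N" and d: "d integrable_on {0..1}"
    and eta: "\<And>x. x \<in> {0..1} \<Longrightarrow> \<eta> x = integral {0..x} d"
    and a: "real j / real N \<le> x" "x \<le> real (Suc j) / real N"
  shows "integral {real j / real N..x} d = \<eta> x - \<eta> (real j / real N)"
proof -
  have sub: "{real j / real N..real (Suc j) / real N} \<subseteq> {0..1}" by (rule cell_sub[OF N j])
  have x1: "x \<in> {0..1}" using subsetD[OF sub, of x] a by auto
  have j1: "real j / real N \<in> {0..1}" using subsetD[OF sub, of "real j / real N"] a by auto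
  have di: "d integrable_on {0..x}" by (rule Henstock_Kurzweil_Integration.integrable_on_subinterval[OF d]) (use x1 in auto)
  have "integral {0..real j / real N} d + integral {real j / real N..x} d = integral {0..x} d"
    by (rule Henstock_Kurzweil_Integration.integral_combine[OF _ _ di]) (use a in auto)
  then show ?thesis using eta[OF x1] eta[OF j1] by simp
qed

lemma orth_step:
  fixes d :: "real \<Rightarrow> real"
  assumes N: "0 < N" and d: "d integrable_on {0..1}"
    and eta: "\<And>x. x \<in> {0..1} \<Longrightarrow> \<eta> x = integral {0..x} d"
    and nodes: "\<And>j. j \<le> N \<Longrightarrow> \<eta> (real j / real N) = 0"
    and Gi: "(\<lambda>t. G (kidx N t) * d t) integrable_on {0..1}"
  shows "integral {0..1} (\<lambda>t. G (kidx N t) * d t) = 0"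
proof -
  have "integral {real j / real N..real (Suc j) / real N} (\<lambda>t. G (kidx N t) * d t) = 0" if j: "j < N" for j
  proof -
    let ?C = "{real j / real N..real (Suc j) / real N}"
    have "integral ?C (\<lambda>t. G (kidx N t) * d t) = integral ?C (\<lambda>t. G j * d t)"
    proof (rule integral_spike[where S="{real (Suc j) / real N}"])
      fix t assume "t \<in> ?C - {real (Suc j) / real N}"
      then have "kidx N t = j" by (intro kidx_eq[OF N]) auto
      then show "G j * d t = G (kidx N t) * d t" by simp
    qed auto
    also have "\<dots> = G j * integral ?C d" by (rule integral_cmult_real)
    also have "integral ?C d = \<eta> (real (Suc j) / real N) - \<eta> (real j / real N)"
      by (rule cell_increment[OF N j d eta]) (auto simp: divide_right_mono)
    also have "\<dots> = 0" using nodes[of j] nodes[of "Suc j"] j by simp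
    finally show ?thesis by simp
  qed
  then show ?thesis using split_cells[OF N Gi] by simp
qed

lemma cs1:
  fixes g :: "real \<Rightarrow> real"
  assumes ab: "a \<le> b" and g: "g integrable_on {a..b}" and g2: "(\<lambda>x. (g x)\<^sup>2) integrable_on {a..b}"
  shows "(integral {a..b} g)\<^sup>2 \<le> (b - a) * integral {a..b} (\<lambda>x. (g x)\<^sup>2)"
proof (cases "a = b")
  case True
  then show ?thesis by simp
next
  case False
  then have L: "0 < b - a" using ab by simp
  define I where "I = integral {a..b} g"
  define J where "J = integral {a..b} (\<lambda>x. (g x)\<^sup>2)"
  define m where "m = I / (b - a)"
  have i1: "(\<lambda>x. (g x)\<^sup>2 - 2 * m * g x) integrable_on {a..b}"
    using g g2 integrable_cmult_real[OF g, of "2 * m"] by (intro integrable_diff) auto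
  have i2: "(\<lambda>x. (g x)\<^sup>2 - 2 * m * g x + m\<^sup>2) integrable_on {a..b}"
    using i1 by (intro integrable_add) auto
  have "0 \<le> integral {a..b} (\<lambda>x. (g x)\<^sup>2 - 2 * m * g x + m\<^sup>2)"
  proof (rule integral_nonneg[OF i2])
    fix x
    have "0 \<le> (g x - m)\<^sup>2" by simp
    then show "0 \<le> (g x)\<^sup>2 - 2 * m * g x + m\<^sup>2" by (simp add: power2_eq_square algebra_simps)
  qed
  also have "integral {a..b} (\<lambda>x. (g x)\<^sup>2 - 2 * m * g x + m\<^sup>2) = J - 2 * m * I + (b - a) * m\<^sup>2"
  proof -
    have "integral {a..b} (\<lambda>x. (g x)\<^sup>2 - 2 * m * g x + m\<^sup>2) = integral {a..b} (\<lambda>x. (g x)\<^sup>2 - 2 * m * g x) + integral {a..b} (\<lambda>x. m\<^sup>2)"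
      using i1 by (intro integral_add) auto
    also have "integral {a..b} (\<lambda>x. (g x)\<^sup>2 - 2 * m * g x) = J - integral {a..b} (\<lambda>x. 2 * m * g x)"
      unfolding J_def using g g2 integrable_cmult_real[OF g, of "2 * m"] by (intro integral_diff) auto
    also have "integral {a..b} (\<lambda>x. 2 * m * g x) = 2 * m * I"
      unfolding I_def using integral_cmult_real[of _ "2 * m" g] by simp
    finally show ?thesis using ab by simp
  qed
  also have "J - 2 * m * I + (b - a) * m\<^sup>2 = J - I\<^sup>2 / (b - a)"
  proof -
    have "(b - a) * m\<^sup>2 = m * I" using L by (simp add: m_def power2_eq_square)
    moreover have "m * I = I\<^sup>2 / (b - a)" by (simp add: m_def power2_eq_square)
    ultimately show ?thesis by simp
  qed
  finally have "I\<^sup>2 / (b - a) \<le> J" by simp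
  then show ?thesis using L unfolding I_def[symmetric] J_def[symmetric] by (simp add: field_simps)
qed

lemma poincare_cells:
  fixes d :: "real \<Rightarrow> real"
  assumes N: "0 < N" and d: "d integrable_on {0..1}" and d2: "(\<lambda>x. (d x)\<^sup>2) integrable_on {0..1}"
    and e2: "(\<lambda>x. (\<eta> x)\<^sup>2) integrable_on {0..1}"
    and eta: "\<And>x. x \<in> {0..1} \<Longrightarrow> \<eta> x = integral {0..x} d"
    and nodes: "\<And>j. j \<le> N \<Longrightarrow> \<eta> (real j / real N) = 0"
  shows "integral {0..1} (\<lambda>x. (\<eta> x)\<^sup>2) \<le> (1 / real N)\<^sup>2 * integral {0..1} (\<lambda>x. (d x)\<^sup>2)"
proof -
  have cell: "integral {real j / real N..real (Suc j) / real N} (\<lambda>x. (\<eta> x)\<^sup>2)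
      \<le> (1 / real N)\<^sup>2 * integral {real j / real N..real (Suc j) / real N} (\<lambda>x. (d x)\<^sup>2)" if j: "j < N" for j
  proof -
    let ?a = "real j / real N" and ?b = "real (Suc j) / real N"
    let ?J = "integral {?a..?b} (\<lambda>x. (d x)\<^sup>2)"
    have sub: "{?a..?b} \<subseteq> {0..1}" by (rule cell_sub[OF N j])
    have ab: "?a \<le> ?b" by (simp add: divide_right_mono)
    have len: "?b - ?a = 1 / real N" using N by (simp add: field_simps)
    have pt: "(\<eta> x)\<^sup>2 \<le> (1 / real N) * ?J" if x: "x \<in> {?a..?b}" for x
    proof -
      have xs: "{?a..x} \<subseteq> {0..1}" using sub x by auto
      have "\<eta> x = integral {?a..x} d"
        using cell_increment[OF N j d eta, of x] x nodes[of j] j by simp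
      then have "(\<eta> x)\<^sup>2 \<le> (x - ?a) * integral {?a..x} (\<lambda>x. (d x)\<^sup>2)"
        using cs1[of ?a x d] x Henstock_Kurzweil_Integration.integrable_on_subinterval[OF d xs] Henstock_Kurzweil_Integration.integrable_on_subinterval[OF d2 xs] by simp
      also have "\<dots> \<le> (1 / real N) * ?J"
      proof (rule mult_mono)
        show "x - ?a \<le> 1 / real N" using x len by auto
        have i: "(\<lambda>x. (d x)\<^sup>2) integrable_on {?a..?b}" by (rule Henstock_Kurzweil_Integration.integrable_on_subinterval[OF d2 sub])
        have "integral {?a..x} (\<lambda>x. (d x)\<^sup>2) + integral {x..?b} (\<lambda>x. (d x)\<^sup>2) = ?J"
          by (rule Henstock_Kurzweil_Integration.integral_combine[OF _ _ i]) (use x in auto)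
        moreover have "0 \<le> integral {x..?b} (\<lambda>x. (d x)\<^sup>2)"
          by (rule integral_nonneg) (use Henstock_Kurzweil_Integration.integrable_on_subinterval[OF i, of x ?b] x in auto)
        ultimately show "integral {?a..x} (\<lambda>x. (d x)\<^sup>2) \<le> ?J" by simp
        show "0 \<le> 1 / real N" by simp
        show "0 \<le> integral {?a..x} (\<lambda>x. (d x)\<^sup>2)"
          by (rule integral_nonneg) (use Henstock_Kurzweil_Integration.integrable_on_subinterval[OF d2 xs] in auto)
      qed
      finally show ?thesis .
    qed
    have "integral {?a..?b} (\<lambda>x. (\<eta> x)\<^sup>2) \<le> integral {?a..?b} (\<lambda>x. (1 / real N) * ?J)"
      by (rule integral_le) (use Henstock_Kurzweil_Integration.integrable_on_subinterval[OF e2 sub] pt in auto)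
    also have "\<dots> = (1 / real N)\<^sup>2 * ?J" using ab len by (simp add: power2_eq_square)
    finally show ?thesis .
  qed
  have "integral {0..1} (\<lambda>x. (\<eta> x)\<^sup>2) = (\<Sum>j<N. integral {real j / real N..real (Suc j) / real N} (\<lambda>x. (\<eta> x)\<^sup>2))"
    by (rule split_cells[OF N e2])
  also have "\<dots> \<le> (\<Sum>j<N. (1 / real N)\<^sup>2 * integral {real j / real N..real (Suc j) / real N} (\<lambda>x. (d x)\<^sup>2))"
    by (rule sum_mono) (use cell in auto)
  also have "\<dots> = (1 / real N)\<^sup>2 * integral {0..1} (\<lambda>x. (d x)\<^sup>2)"
    using split_cells[OF N d2] by (simp add: sum_distrib_left)
  finally show ?thesis .
qed


lemma weak_deriv_unique:
  fixes g :: "real \<Rightarrow> real"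
  assumes gi: "set_integrable lborel {0..1} g"
    and z: "\<And>x. x \<in> {0..1} \<Longrightarrow> (LINT y:{0..x}|lborel. g y) = 0"
  shows "AE x in lborel. x \<in> {0..1} \<longrightarrow> g x = 0"
proof -
  define h where "h x = indicator {0..1::real} x * g x" for x
  have hi: "integrable lborel h"
    using gi unfolding set_integrable_def h_def by simp
  have hm[measurable]: "h \<in> borel_measurable lborel" using hi by (rule borel_measurable_integrable)
  have hm'[measurable]: "h \<in> borel_measurable borel" using hm by simp
  have A: "integral\<^sup>L lborel (\<lambda>x. h x * indicator {a<..} x) = 0" for a
  proof -
    define c where "c = min a 1"
    have eq: "(\<lambda>x. h x * indicator {a<..} x) = (\<lambda>x. h x - indicator {0..c} x *\<^sub>R g x)"
    proof
      fix x show "h x * indicator {a<..} x = h x - indicator {0..c} x *\<^sub>R g x"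
        by (cases "x \<in> {0..1}"; cases "x > a") (auto simp: h_def c_def indicator_def)
    qed
    have ci: "integrable lborel (\<lambda>x. indicator {0..c} x *\<^sub>R g x)"
      using set_integrable_subset[OF gi, of "{0..c}"] unfolding set_integrable_def by (auto simp: c_def)
    have "integral\<^sup>L lborel (\<lambda>x. h x * indicator {a<..} x) = integral\<^sup>L lborel h - (LINT x:{0..c}|lborel. g x)"
      unfolding eq set_lebesgue_integral_def using hi ci by simp
    moreover have "integral\<^sup>L lborel h = 0"
      using z[of 1] unfolding h_def set_lebesgue_integral_def by simp
    moreover have "(LINT x:{0..c}|lborel. g x) = 0"
    proof (cases "0 \<le> c")
      case True
      then show ?thesis using z[of c] by (simp add: c_def)
    next
      case False
      then have "{0..c} = {}" by auto
      then show ?thesis by (simp add: set_lebesgue_integral_def)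
    qed
    ultimately show ?thesis by simp
  qed
  define f1 where "f1 x = ennreal (max 0 (h x))" for x
  define f2 where "f2 x = ennreal (max 0 (- h x))" for x
  have f1m[measurable]: "f1 \<in> borel_measurable lborel" unfolding f1_def by measurable
  have f2m[measurable]: "f2 \<in> borel_measurable lborel" unfolding f2_def by measurable
  have pi: "integrable lborel (\<lambda>x. max 0 (h x) * indicator {a<..} x)" for a
    using hi by (intro integrable_real_mult_indicator integrable_max) auto
  have ni: "integrable lborel (\<lambda>x. max 0 (- h x) * indicator {a<..} x)" for a
    using hi by (intro integrable_real_mult_indicator integrable_max) auto
  have E1: "emeasure (density lborel f1) {a<..} = ennreal (integral\<^sup>L lborel (\<lambda>x. max 0 (h x) * indicator {a<..} x))" for a
  proof -
    have "emeasure (density lborel f1) {a<..} = (\<integral>\<^sup>+ x. f1 x * indicator {a<..} x \<partial>lborel)"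
      by (rule emeasure_density) auto
    also have "\<dots> = (\<integral>\<^sup>+ x. ennreal (max 0 (h x) * indicator {a<..} x) \<partial>lborel)"
      by (intro nn_integral_cong) (auto simp: f1_def indicator_def)
    also have "\<dots> = ennreal (integral\<^sup>L lborel (\<lambda>x. max 0 (h x) * indicator {a<..} x))"
      by (rule nn_integral_eq_integral[OF pi]) auto
    finally show ?thesis .
  qed
  have E2: "emeasure (density lborel f2) {a<..} = ennreal (integral\<^sup>L lborel (\<lambda>x. max 0 (- h x) * indicator {a<..} x))" for a
  proof -
    have "emeasure (density lborel f2) {a<..} = (\<integral>\<^sup>+ x. f2 x * indicator {a<..} x \<partial>lborel)"
      by (rule emeasure_density) auto
    also have "\<dots> = (\<integral>\<^sup>+ x. ennreal (max 0 (- h x) * indicator {a<..} x) \<partial>lborel)"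
      by (intro nn_integral_cong) (auto simp: f2_def indicator_def)
    also have "\<dots> = ennreal (integral\<^sup>L lborel (\<lambda>x. max 0 (- h x) * indicator {a<..} x))"
      by (rule nn_integral_eq_integral[OF ni]) auto
    finally show ?thesis .
  qed
  have PN: "integral\<^sup>L lborel (\<lambda>x. max 0 (h x) * indicator {a<..} x) = integral\<^sup>L lborel (\<lambda>x. max 0 (- h x) * indicator {a<..} x)" for a
  proof -
    have "(\<lambda>x. h x * indicator {a<..} x) = (\<lambda>x. max 0 (h x) * indicator {a<..} x - max 0 (- h x) * indicator {a<..} x)"
      by (auto simp: indicator_def max_def)
    then have "integral\<^sup>L lborel (\<lambda>x. h x * indicator {a<..} x) = integral\<^sup>L lborel (\<lambda>x. max 0 (h x) * indicator {a<..} x) - integral\<^sup>L lborel (\<lambda>x. max 0 (- h x) * indicator {a<..} x)"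
      using pi ni by simp
    then show ?thesis using A[of a] by simp
  qed
  have "density lborel f1 = density lborel f2"
  proof (rule measure_eqI_lessThan)
    show "sets (density lborel f1) = sets borel" "sets (density lborel f2) = sets borel" by auto
    show "emeasure (density lborel f1) {x<..} < \<infinity>" for x using E1[of x] by simp
    show "emeasure (density lborel f1) {x<..} = emeasure (density lborel f2) {x<..}" for x
      using E1[of x] E2[of x] PN[of x] by simp
  qed
  moreover have "integral\<^sup>N lborel f1 \<noteq> \<infinity>"
  proof -
    have "integral\<^sup>N lborel f1 = ennreal (integral\<^sup>L lborel (\<lambda>x. max 0 (h x)))"
      unfolding f1_def by (rule nn_integral_eq_integral) (use hi in auto)
    then show ?thesis by simp
  qed
  ultimately have "AE x in lborel. f1 x = f2 x"
    using finite_density_unique[of f1 lborel f2] by auto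
  then show ?thesis
  proof (rule AE_mp, intro AE_I2 impI)
    fix x assume "f1 x = f2 x" "x \<in> {0..1}"
    then have "max 0 (h x) = max 0 (- h x)" unfolding f1_def f2_def by (simp add: ennreal_inj)
    then have "h x = 0" by (auto simp: max_def split: if_splits)
    then show "g x = 0" using \<open>x \<in> {0..1}\<close> by (simp add: h_def)
  qed
qed



definition L2 :: "(real \<Rightarrow> real) \<Rightarrow> bool" where
  "L2 g \<longleftrightarrow> set_borel_measurable lborel {0..1::real} g \<and> set_integrable lborel {0..1::real} (\<lambda>x. (g x)\<^sup>2)"

lemma sbm_mult:
  assumes "set_borel_measurable lborel S f" "set_borel_measurable lborel S g"
  shows "set_borel_measurable lborel S (\<lambda>x. f x * g x :: real)"
proof -
  have "(\<lambda>x. (indicator S x *\<^sub>R f x) * (indicator S x *\<^sub>R g x)) \<in> borel_measurable lborel"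
    using assms unfolding set_borel_measurable_def by measurable
  moreover have "(\<lambda>x. (indicator S x *\<^sub>R f x) * (indicator S x *\<^sub>R g x)) = (\<lambda>x. indicator S x *\<^sub>R (f x * g x))"
    by (auto simp: indicator_def)
  ultimately show ?thesis unfolding set_borel_measurable_def by simp
qed

lemma sbm_add:
  assumes "set_borel_measurable lborel S f" "set_borel_measurable lborel S g"
  shows "set_borel_measurable lborel S (\<lambda>x. f x + g x :: real)"
proof -
  have "(\<lambda>x. (indicator S x *\<^sub>R f x) + (indicator S x *\<^sub>R g x)) \<in> borel_measurable lborel"
    using assms unfolding set_borel_measurable_def by measurable
  moreover have "(\<lambda>x. (indicator S x *\<^sub>R f x) + (indicator S x *\<^sub>R g x)) = (\<lambda>x. indicator S x *\<^sub>R (f x + g x))"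
    by (auto simp: indicator_def)
  ultimately show ?thesis unfolding set_borel_measurable_def by simp
qed

lemma sbm_cmult:
  assumes "set_borel_measurable lborel S f"
  shows "set_borel_measurable lborel S (\<lambda>x. c * f x :: real)"
proof -
  have "(\<lambda>x. c * (indicator S x *\<^sub>R f x)) \<in> borel_measurable lborel"
    using assms unfolding set_borel_measurable_def by measurable
  moreover have "(\<lambda>x. c * (indicator S x *\<^sub>R f x)) = (\<lambda>x. indicator S x *\<^sub>R (c * f x))"
    by (auto simp: indicator_def)
  ultimately show ?thesis unfolding set_borel_measurable_def by simp
qed

lemma sbm_global:
  assumes "f \<in> borel_measurable borel" "S \<in> sets borel"
  shows "set_borel_measurable lborel S (f :: real \<Rightarrow> real)"
  using assms unfolding set_borel_measurable_def by measurable

lemma L2_prod: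
  assumes "L2 f" "L2 g"
  shows "set_integrable lborel {0..1} (\<lambda>x. f x * g x)"
proof (rule set_integrable_bound[where f="\<lambda>x. ((f x)\<^sup>2 + (g x)\<^sup>2)/2"])
  show "set_integrable lborel {0..1} (\<lambda>x. ((f x)\<^sup>2 + (g x)\<^sup>2)/2)"
    using assms unfolding L2_def by (intro set_integrable_divide set_integral_add) auto
  show "set_borel_measurable lborel {0..1} (\<lambda>x. f x * g x)"
    using assms unfolding L2_def by (intro sbm_mult) auto
  have "\<bar>f x * g x\<bar> \<le> ((f x)\<^sup>2 + (g x)\<^sup>2)/2" for x
  proof -
    have "0 \<le> (\<bar>f x\<bar> - \<bar>g x\<bar>)\<^sup>2" by simp
    then show ?thesis by (simp add: power2_eq_square abs_mult algebra_simps)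
  qed
  then show "AE x in lborel. x \<in> {0..1} \<longrightarrow> norm (f x * g x) \<le> norm (((f x)\<^sup>2 + (g x)\<^sup>2)/2)"
    by (auto intro!: AE_I2)
qed

lemma L2_add: assumes "L2 f" "L2 g" shows "L2 (\<lambda>x. f x + g x)"
proof -
  have m: "set_borel_measurable lborel {0..1} (\<lambda>x. f x + g x)"
    using assms unfolding L2_def by (intro sbm_add) auto
  have "set_integrable lborel {0..1} (\<lambda>x. (f x)\<^sup>2 + (g x)\<^sup>2 + 2 * (f x * g x))"
    using assms L2_prod[OF assms] unfolding L2_def by (intro set_integral_add set_integrable_mult_right) auto
  then have "set_integrable lborel {0..1} (\<lambda>x. (f x + g x)\<^sup>2)"
    by (simp add: power2_eq_square algebra_simps)
  with m show ?thesis unfolding L2_def by simp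
qed

lemma L2_cmult: assumes "L2 f" shows "L2 (\<lambda>x. c * f x)"
proof -
  have m: "set_borel_measurable lborel {0..1} (\<lambda>x. c * f x)"
    using assms unfolding L2_def by (intro sbm_cmult) auto
  have "set_integrable lborel {0..1} (\<lambda>x. c\<^sup>2 * (f x)\<^sup>2)"
    using assms unfolding L2_def by (intro set_integrable_mult_right) auto
  then show ?thesis using m unfolding L2_def by (simp add: power_mult_distrib)
qed

lemma L2_diff: assumes "L2 f" "L2 g" shows "L2 (\<lambda>x. f x - g x)"
  using L2_add[OF assms(1) L2_cmult[OF assms(2), of "-1"]] by simp

lemma L2_bounded:
  assumes "set_borel_measurable lborel {0..1} f" "\<And>x. x \<in> {0..1} \<Longrightarrow> \<bar>f x\<bar> \<le> B"
  shows "L2 f"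
proof -
  have "set_integrable lborel {0..1} (\<lambda>x. (f x)\<^sup>2)"
  proof (rule set_integrable_bound[where f="\<lambda>x. B\<^sup>2"])
    show "set_integrable lborel {0..1::real} (\<lambda>x. B\<^sup>2)"
      unfolding set_integrable_def by (rule borel_integrable_compact) auto
    show "set_borel_measurable lborel {0..1} (\<lambda>x. (f x)\<^sup>2)"
      using sbm_mult[OF assms(1) assms(1)] by (simp add: power2_eq_square)
    have "x \<in> {0..1} \<Longrightarrow> (f x)\<^sup>2 \<le> B\<^sup>2" for x
    proof -
      assume "x \<in> {0..1}"
      then have "\<bar>f x\<bar>\<^sup>2 \<le> B\<^sup>2" using assms(2)[of x] by (intro power_mono) auto
      then show ?thesis by simp
    qed
    then show "AE x in lborel. x \<in> {0..1} \<longrightarrow> norm ((f x)\<^sup>2) \<le> norm (B\<^sup>2)"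
      by (auto intro!: AE_I2)
  qed
  with assms show ?thesis unfolding L2_def by simp
qed

lemma L2_int: assumes "L2 f" shows "set_integrable lborel {0..1} f"
proof -
  have "L2 (\<lambda>_. 1)" by (rule L2_bounded[of _ 1]) (auto intro: sbm_global)
  from L2_prod[OF assms this] show ?thesis by simp
qed

lemma L2_HK: assumes "L2 f" "L2 g"
  shows "(\<lambda>x. f x * g x) integrable_on {0..1}"
    "(LINT x:{0..1}|lborel. f x * g x) = integral {0..1} (\<lambda>x. f x * g x)"
  using set_borel_integral_eq_integral[OF L2_prod[OF assms]] by auto

lemma L2_HK1: assumes "L2 f"
  shows "f integrable_on {0..1}"
    "(LINT x:{0..1}|lborel. f x) = integral {0..1} f"
  using set_borel_integral_eq_integral[OF L2_int[OF assms]] by auto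



lemma H01_facts:
  assumes "H01_pair \<phi> d"
  shows "L2 d" "\<And>x. x \<in> {0..1} \<Longrightarrow> \<phi> x = integral {0..x} d" "continuous_on {0..1} \<phi>" "L2 \<phi>"
    "d integrable_on {0..1}" "\<phi> 1 = 0" "\<phi> 0 = 0"
proof -
  show L: "L2 d" using assms unfolding H01_pair_def L2_def by auto
  have di: "set_integrable lborel {0..1} d" by (rule L2_int[OF L])
  show eq: "\<phi> x = integral {0..x} d" if x: "x \<in> {0..1}" for x
  proof -
    have "set_integrable lborel {0..x} d" using x by (intro set_integrable_subset[OF di]) auto
    then have "(LINT y:{0..x}|lborel. d y) = integral {0..x} d" by (rule set_borel_integral_eq_integral)
    then show ?thesis using assms x unfolding H01_pair_def by auto
  qed
  show d1: "d integrable_on {0..1}" by (rule set_borel_integral_eq_integral(1)[OF di])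
  have "continuous_on {0..1} (\<lambda>x. integral {0..x} d)" by (rule indefinite_integral_continuous_1[OF d1])
  then show c: "continuous_on {0..1} \<phi>" by (rule continuous_on_eq) (use eq in auto)
  have m: "set_borel_measurable lborel {0..1} \<phi>"
    unfolding set_borel_measurable_def using borel_measurable_continuous_on_indicator[OF _ c] by simp
  have "set_integrable lborel {0..1} (\<lambda>x. (\<phi> x)\<^sup>2)"
    unfolding set_integrable_def by (rule borel_integrable_compact) (auto intro!: continuous_intros c)
  with m show "L2 \<phi>" unfolding L2_def by simp
  show "\<phi> 1 = 0" using assms unfolding H01_pair_def by auto
  show "\<phi> 0 = 0" using eq[of 0] by simp
qed

lemma H01_intro:
  assumes L: "L2 d" and eq: "\<And>x. x \<in> {0..1} \<Longrightarrow> \<phi> x = integral {0..x} d" and one: "\<phi> 1 = 0"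
  shows "H01_pair \<phi> d"
proof -
  have di: "set_integrable lborel {0..1} d" by (rule L2_int[OF L])
  have "\<phi> x = (LINT y:{0..x}|lborel. d y)" if x: "x \<in> {0..1}" for x
  proof -
    have "set_integrable lborel {0..x} d" using x by (intro set_integrable_subset[OF di]) auto
    then have "(LINT y:{0..x}|lborel. d y) = integral {0..x} d" by (rule set_borel_integral_eq_integral)
    then show ?thesis using eq[OF x] by simp
  qed
  then show ?thesis using L one unfolding H01_pair_def L2_def by auto
qed


lemma L2_sq_int: assumes "L2 f" shows "(\<lambda>x. (f x)\<^sup>2) integrable_on {0..1}"
  using L2_HK(1)[OF assms assms] by (simp add: power2_eq_square)

lemma step_L2:
  assumes N: "0 < N"
  shows "L2 (\<lambda>t. G (kidx N t))"
proof (rule L2_bounded[where B="\<Sum>i\<le>N. \<bar>G i\<bar>"])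
  show "set_borel_measurable lborel {0..1} (\<lambda>t. G (kidx N t))"
    by (rule sbm_global) (auto simp: kidx_def)
  fix x :: real assume x: "x \<in> {0..1}"
  have "real N * x \<le> real N" using x by (simp add: mult_left_le)
  then have "\<lfloor>real N * x\<rfloor> \<le> int N" by linarith
  then have "kidx N x \<le> N" unfolding kidx_def by simp
  then show "\<bar>G (kidx N x)\<bar> \<le> (\<Sum>i\<le>N. \<bar>G i\<bar>)"
    by (intro member_le_sum) auto
qed

lemma slope_L2: "0 < N \<Longrightarrow> L2 (slope c N)"
  using step_L2[of N "\<lambda>k. real N * (c (Suc k) - c k)"] by (simp add: slope_def[abs_def])

lemma pl_H01:
  assumes N: "0 < N" and c: "c 0 = 0" "c N = 0"
  shows "H01_pair (pl c N) (slope c N)" "Vh N (pl c N)"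
proof -
  show "H01_pair (pl c N) (slope c N)"
  proof (rule H01_intro[OF slope_L2[OF N]])
    fix x :: real assume "x \<in> {0..1}"
    then have "(slope c N has_integral (pl c N x - c 0)) {0..x}" by (intro slope_pl_int[OF N]) auto
    then show "pl c N x = integral {0..x} (slope c N)" using c by (simp add: integral_unique)
  next
    show "pl c N 1 = 0" using pl_node[OF N, of c N] N c by simp
  qed
  show "Vh N (pl c N)" by (rule pl_Vh[OF N c]) simp
qed

lemma pl_diff: "pl (\<lambda>j. a j - b j) N x = pl a N x - pl b N x"
  by (simp add: pl_def algebra_simps)

lemma slope_diff: "slope (\<lambda>j. a j - b j) N x = slope a N x - slope b N x"
  by (simp add: slope_def algebra_simps)

lemma orth_L2:
  assumes N: "0 < N" and H: "H01_pair \<eta> d" and nodes: "\<And>j. j \<le> N \<Longrightarrow> \<eta> (real j / real N) = 0"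
  shows "integral {0..1} (\<lambda>t. G (kidx N t) * d t) = 0"
  by (rule orth_step[OF N H01_facts(5)[OF H] H01_facts(2)[OF H] nodes L2_HK(1)[OF step_L2[OF N] H01_facts(1)[OF H]]])

lemma poinc_L2:
  assumes N: "0 < N" and H: "H01_pair \<eta> d" and nodes: "\<And>j. j \<le> N \<Longrightarrow> \<eta> (real j / real N) = 0"
  shows "integral {0..1} (\<lambda>x. (\<eta> x)\<^sup>2) \<le> (1 / real N)\<^sup>2 * integral {0..1} (\<lambda>x. (d x)\<^sup>2)"
  by (rule poincare_cells[OF N H01_facts(5)[OF H] L2_sq_int[OF H01_facts(1)[OF H]] L2_sq_int[OF H01_facts(4)[OF H]] H01_facts(2)[OF H] nodes])


lemma ae_negl:
  assumes "AE x in lborel. P x"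
  obtains S where "negligible S" "\<And>x. x \<notin> S \<Longrightarrow> P x"
proof -
  obtain N0 where N0: "{x \<in> space lborel. \<not> P x} \<subseteq> N0" "emeasure lborel N0 = 0" "N0 \<in> sets lborel"
    using assms by (rule AE_E)
  have "N0 \<in> null_sets lborel" using N0 by auto
  then have "N0 \<in> null_sets lebesgue" by (rule null_sets_completionI)
  then have "negligible N0" by (simp add: negligible_iff_null_sets)
  moreover have "\<And>x. x \<notin> N0 \<Longrightarrow> P x" using N0(1) by auto
  ultimately show ?thesis using that by blast
qed

lemma ae_integral:
  assumes "AE x in lborel. x \<in> {0..1::real} \<longrightarrow> a x = b x"
  shows "integral {0..1} (\<lambda>x. F x (a x)) = integral {0..1} (\<lambda>x. (F x (b x) :: real))"
proof -
  obtain S where S: "negligible S" "\<And>x. x \<notin> S \<Longrightarrow> x \<in> {0..1} \<longrightarrow> a x = b x"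
    using ae_negl[OF assms] by blast
  show ?thesis by (rule integral_spike[OF S(1)]) (use S(2) in auto)
qed


definition IP :: "(real \<Rightarrow> real) \<Rightarrow> (real \<Rightarrow> real) \<Rightarrow> real" where
  "IP a b = integral {0..1} (\<lambda>x. a x * b x)"

lemma IP_comm: "IP a b = IP b a"
  by (simp add: IP_def mult.commute)

lemma IP_add_left: "L2 a \<Longrightarrow> L2 b \<Longrightarrow> L2 c \<Longrightarrow> IP (\<lambda>x. a x + b x) c = IP a c + IP b c"
  unfolding IP_def by (simp add: distrib_right integral_add L2_HK(1))

lemma IP_diff_left: "L2 a \<Longrightarrow> L2 b \<Longrightarrow> L2 c \<Longrightarrow> IP (\<lambda>x. a x - b x) c = IP a c - IP b c"
  unfolding IP_def by (simp add: left_diff_distrib integral_diff L2_HK(1))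

lemma IP_cong: "(\<And>x. x \<in> {0..1} \<Longrightarrow> a x = a' x) \<Longrightarrow> IP a c = IP a' c"
  unfolding IP_def by (rule integral_cong) simp

lemma IP_nonneg: "L2 a \<Longrightarrow> 0 \<le> IP a a"
  unfolding IP_def by (rule integral_nonneg) (auto simp: L2_HK(1))

lemma IP_lin4:
  assumes "L2 a1" "L2 b1" "L2 a2" "L2 b2" "L2 a3" "L2 b3" "L2 a4" "L2 b4"
  shows "(\<lambda>x. c1 * (a1 x * b1 x) + c2 * (a2 x * b2 x) + c3 * (a3 x * b3 x) + c4 * (a4 x * b4 x)) integrable_on {0..1}"
    and "integral {0..1} (\<lambda>x. c1 * (a1 x * b1 x) + c2 * (a2 x * b2 x) + c3 * (a3 x * b3 x) + c4 * (a4 x * b4 x))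
       = c1 * IP a1 b1 + c2 * IP a2 b2 + c3 * IP a3 b3 + c4 * IP a4 b4"
proof -
  have i: "(\<lambda>x. c * (a x * b x)) integrable_on {0..1}" if "L2 a" "L2 b" for a b c
    using integrable_cmult_real[OF L2_HK(1)[OF that]] .
  have j: "integral {0..1} (\<lambda>x. c * (a x * b x)) = c * IP a b" for a b c
    unfolding IP_def by (rule integral_cmult_real)
  show "(\<lambda>x. c1 * (a1 x * b1 x) + c2 * (a2 x * b2 x) + c3 * (a3 x * b3 x) + c4 * (a4 x * b4 x)) integrable_on {0..1}"
    using assms by (intro integrable_add i)
  show "integral {0..1} (\<lambda>x. c1 * (a1 x * b1 x) + c2 * (a2 x * b2 x) + c3 * (a3 x * b3 x) + c4 * (a4 x * b4 x))
       = c1 * IP a1 b1 + c2 * IP a2 b2 + c3 * IP a3 b3 + c4 * IP a4 b4"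
    using assms by (simp add: integral_add integrable_add i j IP_def)
qed

lemma L2_zero: "L2 (\<lambda>_. 0)"
  by (rule L2_bounded[of _ 0]) (auto intro: sbm_global)

lemma IP_le:
  assumes L: "L2 a" "L2 b" "L2 a1" "L2 b1" "L2 a2" "L2 b2" "L2 a3" "L2 b3" "L2 a4" "L2 b4"
    and le: "\<And>x. a x * b x \<le> c1 * (a1 x * b1 x) + c2 * (a2 x * b2 x) + c3 * (a3 x * b3 x) + c4 * (a4 x * b4 x)"
  shows "IP a b \<le> c1 * IP a1 b1 + c2 * IP a2 b2 + c3 * IP a3 b3 + c4 * IP a4 b4"
proof -
  have "IP a b \<le> integral {0..1} (\<lambda>x. c1 * (a1 x * b1 x) + c2 * (a2 x * b2 x) + c3 * (a3 x * b3 x) + c4 * (a4 x * b4 x))"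
    unfolding IP_def by (rule integral_le[OF L2_HK(1)[OF L(1,2)] IP_lin4(1)[OF L(3-10)]]) (rule le)
  also have "\<dots> = c1 * IP a1 b1 + c2 * IP a2 b2 + c3 * IP a3 b3 + c4 * IP a4 b4" by (rule IP_lin4(2)[OF L(3-10)])
  finally show ?thesis .
qed

lemma amgm: "0 < l \<Longrightarrow> a * b \<le> a\<^sup>2 / (2 * l) + l * b\<^sup>2 / 2" for a b l :: real
proof -
  assume l: "0 < l"
  have "0 \<le> (a - l * b)\<^sup>2" by simp
  then have "2 * l * (a * b) \<le> a\<^sup>2 + l\<^sup>2 * b\<^sup>2" by (simp add: power2_eq_square algebra_simps)
  then show ?thesis using l by (simp add: field_simps power2_eq_square)
qed


lemma L2_cong:
  assumes "L2 a" "\<And>x. x \<in> {0..1} \<Longrightarrow> a x = b x"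
  shows "L2 b"
proof -
  have e1: "(\<lambda>x. indicator {0..1::real} x *\<^sub>R a x) = (\<lambda>x. indicator {0..1} x *\<^sub>R b x)"
    using assms(2) by (auto simp: indicator_def)
  have "set_integrable lborel {0..1} (\<lambda>x. (a x)\<^sup>2) = set_integrable lborel {0..1} (\<lambda>x. (b x)\<^sup>2)"
    by (rule set_integrable_cong) (use assms(2) in auto)
  then show ?thesis using assms(1) e1 unfolding L2_def set_borel_measurable_def by simp
qed

lemma H01_diff:
  assumes "H01_pair a da" "H01_pair b db"
  shows "H01_pair (\<lambda>x. a x - b x) (\<lambda>x. da x - db x)"
proof (rule H01_intro)
  show "L2 (\<lambda>x. da x - db x)" using H01_facts(1)[OF assms(1)] H01_facts(1)[OF assms(2)] by (rule L2_diff)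
  fix x :: real assume x: "x \<in> {0..1}"
  have s: "{0..x} \<subseteq> {0..1}" using x by auto
  show "a x - b x = integral {0..x} (\<lambda>x. da x - db x)"
    using H01_facts(2)[OF assms(1) x] H01_facts(2)[OF assms(2) x]
      Henstock_Kurzweil_Integration.integrable_on_subinterval[OF H01_facts(5)[OF assms(1)] s]
      Henstock_Kurzweil_Integration.integrable_on_subinterval[OF H01_facts(5)[OF assms(2)] s]
    by (simp add: integral_diff)
next
  show "a 1 - b 1 = 0" using H01_facts(6)[OF assms(1)] H01_facts(6)[OF assms(2)] by simp
qed

lemma H01_same_ae:
  assumes "H01_pair a da" "H01_pair b db" "\<And>x. x \<in> {0..1} \<Longrightarrow> a x = b x"
  shows "AE x in lborel. x \<in> {0..1} \<longrightarrow> da x = db x"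
proof -
  have H: "H01_pair (\<lambda>x. a x - b x) (\<lambda>x. da x - db x)" by (rule H01_diff[OF assms(1,2)])
  have "AE x in lborel. x \<in> {0..1} \<longrightarrow> da x - db x = 0"
  proof (rule weak_deriv_unique)
    show "set_integrable lborel {0..1} (\<lambda>x. da x - db x)" by (rule L2_int[OF H01_facts(1)[OF H]])
    fix x :: real assume x: "x \<in> {0..1}"
    have "a x - b x = (LINT y:{0..x}|lborel. da y - db y)" using H x unfolding H01_pair_def by auto
    then show "(LINT y:{0..x}|lborel. da y - db y) = 0" using assms(3)[OF x] by simp
  qed
  then show ?thesis by auto
qed


lemma galerkin_core:
  fixes f h vb dvb vh dvh :: "real \<Rightarrow> real" and Gh :: "nat \<Rightarrow> real"
  assumes N: "0 < N" and gp: "0 < \<gamma>"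
    and Lf: "L2 f" and hstep: "\<And>t. t \<in> {0..1} \<Longrightarrow> h t = Gh (kidx N t)"
    and Hb: "H01_pair vb dvb" and Hh: "H01_pair vh dvh" and Vhh: "Vh N vh"
    and E1: "\<And>\<phi> d\<phi>. H01_pair \<phi> d\<phi> \<Longrightarrow> \<gamma> * IP dvb d\<phi> + IP vb \<phi> = IP f \<phi> - \<beta> * IP h d\<phi>"
    and E2: "\<And>\<phi> d\<phi>. Vh N \<phi> \<Longrightarrow> H01_pair \<phi> d\<phi> \<Longrightarrow> \<gamma> * IP dvh d\<phi> + IP vh \<phi> = IP f \<phi> - \<beta> * IP h d\<phi>"
  shows "\<exists>Q P Y D T S. 0 \<le> Q \<and> 0 \<le> P \<and> 0 \<le> Y \<and> 0 \<le> D \<and> 0 \<le> T \<and> 0 \<le> S \<and>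
     \<gamma> * Q + P \<le> (IP f f + P) / 2 + \<beta>\<^sup>2 / (2 * \<gamma>) * IP h h + \<gamma> / 2 * Q \<and>
     \<gamma> * D \<le> (IP f f + P) / (\<gamma> * (real N)\<^sup>2) + \<gamma> * (real N)\<^sup>2 * Y / 2 \<and>
     Y \<le> (1 / real N)\<^sup>2 * D \<and> \<gamma> * S + T \<le> (Y + T) / 2 \<and>
     IP (\<lambda>x. dvb x - dvh x) (\<lambda>x. dvb x - dvh x) = D + S"
proof -
  have Lh: "L2 h" by (rule L2_cong[OF step_L2[OF N, of Gh]]) (use hstep in auto)
  note Lvb = H01_facts(4)[OF Hb] and Ldvb = H01_facts(1)[OF Hb]
  note Lvh = H01_facts(4)[OF Hh] and Ldvh = H01_facts(1)[OF Hh]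
  obtain c' where c': "c' 0 = 0" "c' N = 0" "\<And>x. x \<in> {0..1} \<Longrightarrow> vh x = pl c' N x"
    using Vh_pl[OF Vhh N] by blast
  define r where "r = slope c' N"
  have Lr: "L2 r" unfolding r_def by (rule slope_L2[OF N])
  have Hr: "H01_pair (pl c' N) r" unfolding r_def by (rule pl_H01(1)[OF N c'(1,2)])
  have ae: "AE x in lborel. x \<in> {0..1} \<longrightarrow> dvh x = r x"
    by (rule H01_same_ae[OF Hh Hr c'(3)])
  define cv where "cv j = vb (real j / real N)" for j
  have cv: "cv 0 = 0" "cv N = 0"
    using H01_facts(7)[OF Hb] H01_facts(6)[OF Hb] N by (simp_all add: cv_def)
  define sv where "sv = slope cv N"
  have Lsv: "L2 sv" unfolding sv_def by (rule slope_L2[OF N])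
  have Hv: "H01_pair (pl cv N) sv" unfolding sv_def by (rule pl_H01(1)[OF N cv])
  define \<eta> where "\<eta> x = vb x - pl cv N x" for x
  define d\<eta> where "d\<eta> x = dvb x - sv x" for x
  have H\<eta>: "H01_pair \<eta> d\<eta>" unfolding \<eta>_def[abs_def] d\<eta>_def[abs_def] by (rule H01_diff[OF Hb Hv])
  note L\<eta> = H01_facts(4)[OF H\<eta>] and Ld\<eta> = H01_facts(1)[OF H\<eta>]
  have nodes: "\<eta> (real j / real N) = 0" if "j \<le> N" for j
    using pl_node[OF N, of cv j] by (simp add: \<eta>_def cv_def)
  define c\<theta> where "c\<theta> j = cv j - c' j" for j
  have c\<theta>: "c\<theta> 0 = 0" "c\<theta> N = 0" using cv c' by (simp_all add: c\<theta>_def)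
  define \<theta> where "\<theta> = pl c\<theta> N"
  define s\<theta> where "s\<theta> = slope c\<theta> N"
  have H\<theta>: "H01_pair \<theta> s\<theta>" unfolding \<theta>_def s\<theta>_def by (rule pl_H01(1)[OF N c\<theta>])
  have V\<theta>: "Vh N \<theta>" unfolding \<theta>_def by (rule pl_H01(2)[OF N c\<theta>])
  note L\<theta> = H01_facts(4)[OF H\<theta>] and Ls\<theta> = H01_facts(1)[OF H\<theta>]
  have \<theta>eq: "\<theta> x = pl cv N x - vh x" if "x \<in> {0..1}" for x
    using c'(3)[OF that] unfolding \<theta>_def c\<theta>_def[abs_def] by (simp add: pl_diff)
  have s\<theta>eq: "s\<theta> x = sv x - r x" for x
    unfolding s\<theta>_def sv_def r_def c\<theta>_def[abs_def] by (simp add: slope_diff)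
  have orth: "IP (\<lambda>t. G (kidx N t)) d\<eta> = 0" for G
    unfolding IP_def by (rule orth_L2[OF N H\<eta> nodes])
  have o1: "IP h d\<eta> = 0"
  proof -
    have "IP h d\<eta> = IP (\<lambda>t. Gh (kidx N t)) d\<eta>" by (rule IP_cong) (use hstep in auto)
    then show ?thesis using orth by simp
  qed
  have o2: "IP sv d\<eta> = 0"
    using orth[of "\<lambda>k. real N * (cv (Suc k) - cv k)"] unfolding sv_def slope_def[abs_def] by simp
  have o3: "IP s\<theta> d\<eta> = 0"
    using orth[of "\<lambda>k. real N * (c\<theta> (Suc k) - c\<theta> k)"] unfolding s\<theta>_def slope_def[abs_def] by simp
  define Q where "Q = IP dvb dvb"
  define P where "P = IP vb vb"
  define Y where "Y = IP \<eta> \<eta>"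
  define D where "D = IP d\<eta> d\<eta>"
  define T where "T = IP \<theta> \<theta>"
  define S where "S = IP s\<theta> s\<theta>"
  have nn: "0 \<le> Q" "0 \<le> P" "0 \<le> Y" "0 \<le> D" "0 \<le> T" "0 \<le> S"
    unfolding Q_def P_def Y_def D_def T_def S_def using Ldvb Lvb L\<eta> Ld\<eta> L\<theta> Ls\<theta> by (auto intro: IP_nonneg)
  have h1: "\<gamma> * Q + P \<le> (IP f f + P) / 2 + \<beta>\<^sup>2 / (2 * \<gamma>) * IP h h + \<gamma> / 2 * Q"
  proof -
    have eq: "\<gamma> * Q + P = IP f vb - \<beta> * IP h dvb" using E1[OF Hb] unfolding Q_def P_def .
    have a: "IP f vb \<le> 1/2 * IP f f + 1/2 * IP vb vb + 0 * IP (\<lambda>_. 0) (\<lambda>_. 0) + 0 * IP (\<lambda>_. 0) (\<lambda>_. 0)"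
    proof (rule IP_le[OF Lf Lvb Lf Lf Lvb Lvb L2_zero L2_zero L2_zero L2_zero])
      fix x show "f x * vb x \<le> 1/2 * (f x * f x) + 1/2 * (vb x * vb x) + 0 * (0 * 0) + 0 * (0 * 0)"
        using amgm[of 1 "f x" "vb x"] by (simp add: power2_eq_square)
    qed
    have Lbh: "L2 (\<lambda>x. - \<beta> * h x)" by (rule L2_cmult[OF Lh])
    have b: "IP (\<lambda>x. - \<beta> * h x) dvb \<le> \<beta>\<^sup>2 / (2 * \<gamma>) * IP h h + \<gamma> / 2 * IP dvb dvb + 0 * IP (\<lambda>_. 0) (\<lambda>_. 0) + 0 * IP (\<lambda>_. 0) (\<lambda>_. 0)"
    proof (rule IP_le[OF Lbh Ldvb Lh Lh Ldvb Ldvb L2_zero L2_zero L2_zero L2_zero])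
      fix x show "- \<beta> * h x * dvb x \<le> \<beta>\<^sup>2 / (2 * \<gamma>) * (h x * h x) + \<gamma> / 2 * (dvb x * dvb x) + 0 * (0 * 0) + 0 * (0 * 0)"
        using amgm[OF gp, of "- \<beta> * h x" "dvb x"] by (simp add: power2_eq_square algebra_simps)
    qed
    have c: "IP (\<lambda>x. - \<beta> * h x) dvb = - \<beta> * IP h dvb"
      unfolding IP_def using integral_cmult_real[of "{0..1}" "- \<beta>" "\<lambda>x. h x * dvb x"] by (simp add: mult.assoc)
    have "IP f vb - \<beta> * IP h dvb \<le> (IP f f + IP vb vb) / 2 + \<beta>\<^sup>2 / (2 * \<gamma>) * IP h h + \<gamma> / 2 * IP dvb dvb" using a b c by (simp add: add_divide_distrib)
    then show ?thesis using eq unfolding Q_def P_def by simp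
  qed
  have h2: "\<gamma> * D \<le> (IP f f + P) / (\<gamma> * (real N)\<^sup>2) + \<gamma> * (real N)\<^sup>2 * Y / 2"
  proof -
    have dvbeq: "dvb = (\<lambda>x. d\<eta> x + sv x)" by (simp add: d\<eta>_def)
    have "IP dvb d\<eta> = D + IP sv d\<eta>"
      unfolding dvbeq D_def by (rule IP_add_left[OF Ld\<eta> Lsv Ld\<eta>])
    then have "IP dvb d\<eta> = D" using o2 by simp
    then have "\<gamma> * D = IP f \<eta> - IP vb \<eta>" using E1[OF H\<eta>] o1 by simp
    also have "\<dots> = IP (\<lambda>x. f x - vb x) \<eta>" by (rule IP_diff_left[OF Lf Lvb L\<eta>, symmetric])
    also have "\<dots> \<le> 1 / (\<gamma> * (real N)\<^sup>2) * IP f f + 1 / (\<gamma> * (real N)\<^sup>2) * IP vb vb + (\<gamma> * (real N)\<^sup>2) / 2 * IP \<eta> \<eta> + 0 * IP (\<lambda>_. 0) (\<lambda>_. 0)"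
    proof (rule IP_le[OF L2_diff[OF Lf Lvb] L\<eta> Lf Lf Lvb Lvb L\<eta> L\<eta> L2_zero L2_zero])
      fix x
      define l where "l = \<gamma> * (real N)\<^sup>2"
      have l: "0 < l" unfolding l_def using gp N by simp
      have "(f x - vb x) * \<eta> x \<le> (f x - vb x)\<^sup>2 / (2 * l) + l * (\<eta> x)\<^sup>2 / 2" by (rule amgm[OF l])
      also have "(f x - vb x)\<^sup>2 / (2 * l) \<le> (2 * (f x)\<^sup>2 + 2 * (vb x)\<^sup>2) / (2 * l)"
      proof (rule divide_right_mono)
        have "0 \<le> (f x + vb x)\<^sup>2" by simp
        then show "(f x - vb x)\<^sup>2 \<le> 2 * (f x)\<^sup>2 + 2 * (vb x)\<^sup>2" by (simp add: power2_eq_square algebra_simps)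
      qed (use l in simp)
      finally show "(f x - vb x) * \<eta> x \<le> 1 / (\<gamma> * (real N)\<^sup>2) * (f x * f x) + 1 / (\<gamma> * (real N)\<^sup>2) * (vb x * vb x) + (\<gamma> * (real N)\<^sup>2) / 2 * (\<eta> x * \<eta> x) + 0 * (0 * 0)"
        unfolding l_def[symmetric] using l by (simp add: power2_eq_square field_simps)
    qed
    finally show ?thesis unfolding P_def Y_def by (simp add: add_divide_distrib)
  qed
  have h3: "Y \<le> (1 / real N)\<^sup>2 * D"
    using poinc_L2[OF N H\<eta> nodes] unfolding Y_def D_def IP_def by (simp add: power2_eq_square)
  have h4: "\<gamma> * S + T \<le> (Y + T) / 2"
  proof -
    have e: "\<gamma> * IP dvb s\<theta> + IP vb \<theta> = \<gamma> * IP dvh s\<theta> + IP vh \<theta>"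
      using E1[OF H\<theta>] E2[OF V\<theta> H\<theta>] by simp
    have a1: "IP dvh s\<theta> = IP r s\<theta>"
      unfolding IP_def using ae_integral[OF ae, of "\<lambda>x y. y * s\<theta> x"] by simp
    have dvbeq: "dvb = (\<lambda>x. d\<eta> x + sv x)" by (simp add: d\<eta>_def)
    have a2: "IP dvb s\<theta> = IP sv s\<theta>"
      unfolding dvbeq using IP_add_left[OF Ld\<eta> Lsv Ls\<theta>] o3 IP_comm[of d\<eta> s\<theta>] by simp
    have a3: "IP sv s\<theta> - IP r s\<theta> = S"
    proof -
      have "IP sv s\<theta> - IP r s\<theta> = IP (\<lambda>x. sv x - r x) s\<theta>" by (rule IP_diff_left[OF Lsv Lr Ls\<theta>, symmetric])
      also have "(\<lambda>x. sv x - r x) = s\<theta>" using s\<theta>eq by auto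
      finally show ?thesis unfolding S_def .
    qed
    have a4: "IP vb \<theta> - IP vh \<theta> = IP \<eta> \<theta> + T"
    proof -
      have "IP vb \<theta> - IP vh \<theta> = IP (\<lambda>x. vb x - vh x) \<theta>" by (rule IP_diff_left[OF Lvb Lvh L\<theta>, symmetric])
      also have "\<dots> = IP (\<lambda>x. \<eta> x + \<theta> x) \<theta>" by (rule IP_cong) (use \<theta>eq in \<open>auto simp: \<eta>_def\<close>)
      also have "\<dots> = IP \<eta> \<theta> + T" unfolding T_def by (rule IP_add_left[OF L\<eta> L\<theta> L\<theta>])
      finally show ?thesis .
    qed
    have key: "\<gamma> * S + IP \<eta> \<theta> + T = 0"
    proof -
      have "\<gamma> * (IP sv s\<theta> - IP r s\<theta>) + (IP vb \<theta> - IP vh \<theta>) = 0" using e a1 a2 by (simp add: algebra_simps)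
      then show ?thesis using a3 a4 by simp
    qed
    have Lm: "L2 (\<lambda>x. - \<eta> x)" using L2_cmult[OF L\<eta>, of "-1"] by simp
    have b: "IP (\<lambda>x. - \<eta> x) \<theta> \<le> 1/2 * IP \<eta> \<eta> + 1/2 * IP \<theta> \<theta> + 0 * IP (\<lambda>_. 0) (\<lambda>_. 0) + 0 * IP (\<lambda>_. 0) (\<lambda>_. 0)"
    proof (rule IP_le[OF Lm L\<theta> L\<eta> L\<eta> L\<theta> L\<theta> L2_zero L2_zero L2_zero L2_zero])
      fix x show "- \<eta> x * \<theta> x \<le> 1/2 * (\<eta> x * \<eta> x) + 1/2 * (\<theta> x * \<theta> x) + 0 * (0 * 0) + 0 * (0 * 0)"
        using amgm[of 1 "- \<eta> x" "\<theta> x"] by (simp add: power2_eq_square)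
    qed
    have c: "IP (\<lambda>x. - \<eta> x) \<theta> = - IP \<eta> \<theta>" unfolding IP_def by simp
    show ?thesis using key b c unfolding Y_def T_def by simp
  qed
  have fin: "IP (\<lambda>x. dvb x - dvh x) (\<lambda>x. dvb x - dvh x) = D + S"
  proof -
    have "IP (\<lambda>x. dvb x - dvh x) (\<lambda>x. dvb x - dvh x) = IP (\<lambda>x. dvb x - r x) (\<lambda>x. dvb x - r x)"
      unfolding IP_def using ae_integral[OF ae, of "\<lambda>x y. (dvb x - y) * (dvb x - y)"] by simp
    also have "(\<lambda>x. dvb x - r x) = (\<lambda>x. d\<eta> x + s\<theta> x)" by (auto simp: d\<eta>_def s\<theta>eq)
    also have "IP (\<lambda>x. d\<eta> x + s\<theta> x) (\<lambda>x. d\<eta> x + s\<theta> x) = IP d\<eta> (\<lambda>x. d\<eta> x + s\<theta> x) + IP s\<theta> (\<lambda>x. d\<eta> x + s\<theta> x)"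
      by (rule IP_add_left[OF Ld\<eta> Ls\<theta> L2_add[OF Ld\<eta> Ls\<theta>]])
    also have "IP d\<eta> (\<lambda>x. d\<eta> x + s\<theta> x) = D + IP s\<theta> d\<eta>"
      unfolding D_def using IP_add_left[OF Ld\<eta> Ls\<theta> Ld\<eta>] IP_comm by metis
    also have "IP s\<theta> (\<lambda>x. d\<eta> x + s\<theta> x) = IP d\<eta> s\<theta> + S"
      unfolding S_def using IP_add_left[OF Ld\<eta> Ls\<theta> Ls\<theta>] IP_comm by metis
    finally show ?thesis using o3 IP_comm[of d\<eta> s\<theta>] by simp
  qed
  show ?thesis using nn h1 h2 h3 h4 fin unfolding P_def[symmetric] by blast
qed


lemma lipschitz_deriv:
  fixes f :: "real \<Rightarrow> real"
  assumes d: "\<And>x. f differentiable (at x)" and b: "\<And>x. \<bar>deriv f x\<bar> \<le> B"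
  shows "\<bar>f a - f b\<bar> \<le> B * \<bar>a - b\<bar>"
proof -
  have D: "DERIV f x :> deriv f x" for x using d[of x] by (simp add: DERIV_deriv_iff_real_differentiable)
  have main: "\<bar>f q - f p\<bar> \<le> B * \<bar>q - p\<bar>" if pq: "p < q" for p q
  proof -
    obtain z where "f q - f p = (q - p) * deriv f z" using MVT2[OF pq, of f "deriv f"] D by blast
    then have "\<bar>f q - f p\<bar> = \<bar>q - p\<bar> * \<bar>deriv f z\<bar>" by (simp add: abs_mult)
    also have "\<dots> \<le> \<bar>q - p\<bar> * B" by (rule mult_left_mono[OF b]) simp
    finally show ?thesis by (simp add: mult.commute)
  qed
  show ?thesis
  proof (cases a b rule: linorder_cases)
    case less then show ?thesis using main[of a b] by (simp add: abs_minus_commute)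
  next
    case equal then show ?thesis by simp
  next
    case greater then show ?thesis using main[of b a] by simp
  qed
qed

lemma C1_le_bound:
  assumes "C1_norm_le f M" "0 \<le> t"
  shows "\<bar>f x t\<bar> \<le> M"
proof -
  obtain a b where ab: "a + b \<le> M" "\<And>x t. 0 \<le> t \<Longrightarrow> \<bar>f x t\<bar> \<le> a"
    "\<And>x t. 0 \<le> t \<Longrightarrow> sqrt ((partial_x f x t)\<^sup>2 + (partial_t f x t)\<^sup>2) \<le> b"
    using assms(1) unfolding C1_norm_le_def by blast
  have "0 \<le> b" using ab(3)[OF assms(2), of x] by (meson order_trans real_sqrt_ge_zero add_nonneg_nonneg zero_le_power2)
  then show ?thesis using ab(1) ab(2)[OF assms(2), of x] by linarith
qed

lemma i1_alg:
  fixes v0 v1 v2 a dx dt A Q :: real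
  assumes "\<bar>v0\<bar> \<le> A" "\<bar>v1\<bar> \<le> A" "\<bar>v2\<bar> \<le> A" "\<bar>a\<bar> \<le> Q * (2 * dx)"
    and "0 < dx" "0 < dt" "dt \<le> 1" "0 \<le> Q"
  shows "\<bar>v0 + dt * ((a + dx / dt * (v1 + v2 - 2 * v0)) / (2 * dx))\<bar> \<le> 3 * A + Q"
proof -
  have e: "dt * ((a + dx / dt * (v1 + v2 - 2 * v0)) / (2 * dx)) = dt * (a / (2 * dx)) + (v1 + v2 - 2 * v0) / 2"
    using assms(5,6) by (simp add: field_simps)
  have "\<bar>a / (2 * dx)\<bar> \<le> Q" using assms(4,5) by (simp add: abs_divide field_simps)
  then have "\<bar>dt * (a / (2 * dx))\<bar> \<le> Q"
  proof -
    have "\<bar>dt * (a / (2 * dx))\<bar> = dt * \<bar>a / (2 * dx)\<bar>" using assms(6) by (simp add: abs_mult)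
    also have "\<dots> \<le> 1 * Q" using assms(6,7,8) \<open>\<bar>a / (2 * dx)\<bar> \<le> Q\<close> by (intro mult_mono) auto
    finally show ?thesis by simp
  qed
  moreover have "\<bar>(v1 + v2 - 2 * v0) / 2\<bar> \<le> 2 * A" using assms(1-3) by (simp add: abs_divide)
  ultimately show ?thesis unfolding e using assms(1) by linarith
qed

lemma i2_alg:
  fixes g0 p q dx dt \<epsilon> CFL Av Au Bg :: real
  assumes "\<bar>g0\<bar> \<le> Bg" "\<bar>p\<bar> \<le> 2 * (Av * \<epsilon>\<^sup>2)" "\<bar>q\<bar> \<le> 2 * (Au * \<epsilon>\<^sup>2) * dx"
    and "0 < \<epsilon>" "\<epsilon> \<le> dt" "\<epsilon> \<le> 1" "dt = CFL * dx" "0 < CFL" "CFL < 1" "0 < dx" "0 \<le> Av" "0 \<le> Au"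
  shows "\<bar>g0 + ((p + dx / dt * q) / (2 * dx)) / \<epsilon>\<bar> \<le> Bg + Av + Au / CFL"
proof -
  have dt: "0 < dt" using assms by simp
  have e: "((p + dx / dt * q) / (2 * dx)) / \<epsilon> = p / (2 * dx * \<epsilon>) + q / (2 * dt * \<epsilon>)"
    using dt assms(4,10) by (simp add: field_simps)
  have edx: "\<epsilon> \<le> dx" using assms(5,7,8,9,10) by (smt (verit) mult_le_cancel_right1)
  have "\<bar>p / (2 * dx * \<epsilon>)\<bar> \<le> Av * \<epsilon> / dx"
    using assms(2,4,10) by (simp add: abs_divide power2_eq_square field_simps)
  also have "\<dots> \<le> Av" using edx assms(10,11) by (simp add: field_simps mult_left_mono)
  finally have 1: "\<bar>p / (2 * dx * \<epsilon>)\<bar> \<le> Av" .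
  have "\<bar>q / (2 * dt * \<epsilon>)\<bar> \<le> Au * \<epsilon> * dx / dt"
    using assms(3,4) dt by (simp add: abs_divide power2_eq_square field_simps)
  also have "\<dots> = Au * \<epsilon> / CFL" using assms(7,8,10) by (simp add: field_simps)
  also have "\<dots> \<le> Au / CFL" using assms(6,8,12) by (simp add: field_simps mult_left_le)
  finally have 2: "\<bar>q / (2 * dt * \<epsilon>)\<bar> \<le> Au / CFL" .
  show ?thesis unfolding e using 1 2 assms(1) by linarith
qed

lemma iota_bounds:
  fixes V U g :: "real \<Rightarrow> real \<Rightarrow> real"
  assumes dx: "0 < dx" and dt: "0 < dt" "dt \<le> 1" "dt = CFL * dx" and CFL: "0 < CFL" "CFL < 1"
    and eps: "0 < \<epsilon>" "\<epsilon> \<le> dt" "\<epsilon> \<le> 1" and A: "0 \<le> Av" "0 \<le> Au"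
    and Vb: "\<And>x. \<bar>V x (real n * dt)\<bar> \<le> Av * \<epsilon>\<^sup>2"
    and Ud: "\<And>a b. \<bar>U a (real n * dt) - U b (real n * dt)\<bar> \<le> Au * \<epsilon>\<^sup>2 * \<bar>a - b\<bar>"
    and gb: "\<And>x. \<bar>g x (real n * dt)\<bar> \<le> Bg"
  shows "\<bar>iota1 V U dx dt n x\<bar> \<le> 3 * (Av * \<epsilon>\<^sup>2) + Au * \<epsilon>\<^sup>2"
    and "\<bar>iota2 V U g \<epsilon> dx dt n x\<bar> \<le> Bg + Av + Au / CFL"
proof -
  define i where "i = cell dx x"
  define T where "T = real n * dt"
  have x1: "xbar dx (i + 1) - xbar dx (i - 1) = 2 * dx" by (simp add: xbar_def algebra_simps)
  have x2: "\<bar>xbar dx (i + 1) - xbar dx i\<bar> = dx" "\<bar>xbar dx (i - 1) - xbar dx i\<bar> = dx"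
    using dx by (simp_all add: xbar_def algebra_simps)
  have a: "\<bar>U (xbar dx (i + 1)) T - U (xbar dx (i - 1)) T\<bar> \<le> Au * \<epsilon>\<^sup>2 * (2 * dx)"
    using Ud[of "xbar dx (i + 1)" "xbar dx (i - 1)"] x1 dx unfolding T_def by simp
  show "\<bar>iota1 V U dx dt n x\<bar> \<le> 3 * (Av * \<epsilon>\<^sup>2) + Au * \<epsilon>\<^sup>2"
    unfolding iota1_def tilde_ux_def Let_def i_def[symmetric] T_def[symmetric]
    by (rule i1_alg) (use Vb a dx dt A in \<open>auto simp: T_def\<close>)
  have p: "\<bar>V (xbar dx (i + 1)) T - V (xbar dx (i - 1)) T\<bar> \<le> 2 * (Av * \<epsilon>\<^sup>2)"
    using Vb[of "xbar dx (i + 1)"] Vb[of "xbar dx (i - 1)"] unfolding T_def by linarith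
  have q1: "\<bar>U (xbar dx (i + 1)) T - U (xbar dx i) T\<bar> \<le> Au * \<epsilon>\<^sup>2 * dx"
    using Ud[of "xbar dx (i + 1)" "xbar dx i"] x2 unfolding T_def by simp
  have q2: "\<bar>U (xbar dx (i - 1)) T - U (xbar dx i) T\<bar> \<le> Au * \<epsilon>\<^sup>2 * dx"
    using Ud[of "xbar dx (i - 1)" "xbar dx i"] x2 unfolding T_def by simp
  have q: "\<bar>U (xbar dx (i + 1)) T + U (xbar dx (i - 1)) T - 2 * U (xbar dx i) T\<bar> \<le> 2 * (Au * \<epsilon>\<^sup>2) * dx"
    using q1 q2 by linarith
  show "\<bar>iota2 V U g \<epsilon> dx dt n x\<bar> \<le> Bg + Av + Au / CFL"
    unfolding iota2_def tilde_vx_def Let_def i_def[symmetric] T_def[symmetric]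
    by (rule i2_alg) (use gb p q dx dt CFL eps A in \<open>auto simp: T_def\<close>)
qed


lemma final_arith:
  fixes e e0 dt CFL Nr \<gamma> \<beta> Q P Y D T S F2 H2 Fc Hc :: real
  assumes e: "0 < e" "e \<le> e0" "e0 < 1" "e \<le> dt" "dt \<le> 1"
    and CFL: "0 < CFL" and Nr: "0 < Nr" and dtd: "dt = CFL * (1 / Nr)"
    and g: "\<gamma> = dt\<^sup>2 * (1 - e)\<^sup>2 / e\<^sup>2" and b: "\<beta> = dt\<^sup>2 * (1 - e)"
    and nn: "0 \<le> Q" "0 \<le> P" "0 \<le> Y" "0 \<le> D" "0 \<le> T" "0 \<le> S" "0 \<le> F2" "0 \<le> H2"
    and h1: "\<gamma> * Q + P \<le> (F2 + P) / 2 + \<beta>\<^sup>2 / (2 * \<gamma>) * H2 + \<gamma> / 2 * Q"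
    and h2: "\<gamma> * D \<le> (F2 + P) / (\<gamma> * Nr\<^sup>2) + \<gamma> * Nr\<^sup>2 * Y / 2"
    and h3: "Y \<le> (1 / Nr)\<^sup>2 * D"
    and h4: "\<gamma> * S + T \<le> (Y + T) / 2"
    and hF: "F2 \<le> (Fc * e\<^sup>2)\<^sup>2" and hH: "H2 \<le> Hc\<^sup>2"
  shows "D + S \<le> (2 * (2 * Fc\<^sup>2 + Hc\<^sup>2) / (CFL\<^sup>2 * (1 - e0) ^ 4) * (1 + 1 / (2 * (1 - e0)\<^sup>2 * CFL\<^sup>2))) * (e\<^sup>2 * dt)\<^sup>2"
proof -
  have dt0: "0 < dt" using e by simp
  have e1: "0 < 1 - e" using e by simp
  have gp: "0 < \<gamma>" unfolding g using dt0 e1 e by simp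
  define w where "w = 1 - e"
  have w0: "0 < w" using e1 by (simp add: w_def)
  have gw: "\<gamma> = dt\<^sup>2 * w\<^sup>2 / e\<^sup>2" using g by (simp add: w_def)
  have Nrd: "Nr = CFL / dt" using dtd Nr dt0 by (simp add: field_simps)
  have k: "\<beta>\<^sup>2 = dt\<^sup>2 * e\<^sup>2 * \<gamma>" unfolding g b using e(1) by (simp add: power2_eq_square)
  have bg: "\<beta>\<^sup>2 / \<gamma> = dt\<^sup>2 * e\<^sup>2" unfolding k using gp by simp
  have "P \<le> F2 + \<beta>\<^sup>2 / \<gamma> * H2"
  proof -
    have "\<gamma> / 2 * Q \<ge> 0" using gp nn by simp
    then show ?thesis using h1 by (simp add: field_simps)
  qed
  then have P: "P \<le> F2 + dt\<^sup>2 * e\<^sup>2 * H2" using bg by simp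
  have YD: "\<gamma> * Nr\<^sup>2 * Y / 2 \<le> \<gamma> * D / 2"
  proof -
    have "\<gamma> * Nr\<^sup>2 * Y \<le> \<gamma> * Nr\<^sup>2 * ((1 / Nr)\<^sup>2 * D)" using h3 gp Nr by (intro mult_left_mono) auto
    also have "\<dots> = \<gamma> * D" using Nr by (simp add: field_simps power2_eq_square)
    finally show ?thesis by simp
  qed
  have D1: "D \<le> 2 * (F2 + P) / (\<gamma>\<^sup>2 * Nr\<^sup>2)"
  proof -
    have "\<gamma> * D / 2 \<le> (F2 + P) / (\<gamma> * Nr\<^sup>2)" using h2 YD by linarith
    then show ?thesis using gp Nr by (simp add: field_simps power2_eq_square)
  qed
  have R: "1 / (\<gamma>\<^sup>2 * Nr\<^sup>2) = e ^ 4 / (dt\<^sup>2 * w ^ 4 * CFL\<^sup>2)"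
    unfolding gw Nrd using dt0 w0 e CFL by (simp add: field_simps power2_eq_square power4_eq_xxxx)
  have FP: "F2 + P \<le> 2 * Fc\<^sup>2 * e ^ 4 + dt\<^sup>2 * e\<^sup>2 * Hc\<^sup>2"
  proof -
    have "dt\<^sup>2 * e\<^sup>2 * H2 \<le> dt\<^sup>2 * e\<^sup>2 * Hc\<^sup>2" using hH by (intro mult_left_mono) auto
    moreover have "(Fc * e\<^sup>2)\<^sup>2 = Fc\<^sup>2 * e ^ 4" by (simp add: power_mult_distrib power2_eq_square power4_eq_xxxx)
    ultimately show ?thesis using P hF by linarith
  qed
  have ee: "e ^ 4 \<le> dt ^ 4" "e\<^sup>2 \<le> dt\<^sup>2" using e by (auto intro: power_mono)
  have D2: "D \<le> 2 * (2 * Fc\<^sup>2 + Hc\<^sup>2) / (CFL\<^sup>2 * (1 - e0) ^ 4) * (e\<^sup>2 * dt)\<^sup>2"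
  proof -
    have "D \<le> 2 * (F2 + P) * (1 / (\<gamma>\<^sup>2 * Nr\<^sup>2))" using D1 by simp
    also have "\<dots> \<le> 2 * (2 * Fc\<^sup>2 * e ^ 4 + dt\<^sup>2 * e\<^sup>2 * Hc\<^sup>2) * (1 / (\<gamma>\<^sup>2 * Nr\<^sup>2))"
      using FP gp Nr by (intro mult_right_mono) auto
    also have "\<dots> = 2 * (2 * Fc\<^sup>2 * (e ^ 4 / dt\<^sup>2) + Hc\<^sup>2 * e\<^sup>2) * e ^ 4 / (w ^ 4 * CFL\<^sup>2)"
      unfolding R using dt0 by (simp add: field_simps power2_eq_square)
    also have "\<dots> \<le> 2 * (2 * Fc\<^sup>2 * dt\<^sup>2 + Hc\<^sup>2 * dt\<^sup>2) * e ^ 4 / (w ^ 4 * CFL\<^sup>2)"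
    proof -
      have "e ^ 4 / dt\<^sup>2 \<le> dt\<^sup>2" using ee dt0 by (simp add: field_simps power2_eq_square power4_eq_xxxx)
      then have "2 * Fc\<^sup>2 * (e ^ 4 / dt\<^sup>2) + Hc\<^sup>2 * e\<^sup>2 \<le> 2 * Fc\<^sup>2 * dt\<^sup>2 + Hc\<^sup>2 * dt\<^sup>2"
        using ee by (intro add_mono mult_left_mono) auto
      then show ?thesis using w0 CFL by (intro divide_right_mono mult_right_mono) auto
    qed
    also have "\<dots> = 2 * (2 * Fc\<^sup>2 + Hc\<^sup>2) / (CFL\<^sup>2 * w ^ 4) * (e\<^sup>2 * dt)\<^sup>2"
      by (simp add: field_simps power2_eq_square power4_eq_xxxx)
    also have "\<dots> \<le> 2 * (2 * Fc\<^sup>2 + Hc\<^sup>2) / (CFL\<^sup>2 * (1 - e0) ^ 4) * (e\<^sup>2 * dt)\<^sup>2"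
    proof -
      have "(1 - e0) ^ 4 \<le> w ^ 4" using e unfolding w_def by (intro power_mono) auto
      moreover have "0 < (1 - e0) ^ 4" using e by simp
      ultimately have "1 / (CFL\<^sup>2 * w ^ 4) \<le> 1 / (CFL\<^sup>2 * (1 - e0) ^ 4)"
        using CFL by (intro divide_left_mono mult_left_mono mult_pos_pos) auto
      then have "(2 * (2 * Fc\<^sup>2 + Hc\<^sup>2)) * (1 / (CFL\<^sup>2 * w ^ 4)) \<le> (2 * (2 * Fc\<^sup>2 + Hc\<^sup>2)) * (1 / (CFL\<^sup>2 * (1 - e0) ^ 4))"
        by (rule mult_left_mono) auto
      then have "(2 * (2 * Fc\<^sup>2 + Hc\<^sup>2)) * (1 / (CFL\<^sup>2 * w ^ 4)) * (e\<^sup>2 * dt)\<^sup>2 \<le> (2 * (2 * Fc\<^sup>2 + Hc\<^sup>2)) * (1 / (CFL\<^sup>2 * (1 - e0) ^ 4)) * (e\<^sup>2 * dt)\<^sup>2"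
        by (rule mult_right_mono) simp
      then show ?thesis by simp
    qed
    finally show ?thesis .
  qed
  have S1: "S \<le> D * (1 / (2 * \<gamma> * Nr\<^sup>2))"
  proof -
    have "\<gamma> * S \<le> Y / 2" using h4 nn by simp
    also have "\<dots> \<le> (1 / Nr)\<^sup>2 * D / 2" using h3 by simp
    finally show ?thesis using gp Nr by (simp add: field_simps power2_eq_square)
  qed
  have R2: "1 / (2 * \<gamma> * Nr\<^sup>2) \<le> 1 / (2 * (1 - e0)\<^sup>2 * CFL\<^sup>2)"
  proof -
    have "1 / (2 * \<gamma> * Nr\<^sup>2) = e\<^sup>2 / (2 * w\<^sup>2 * CFL\<^sup>2)"
      unfolding gw Nrd using dt0 w0 e CFL by (simp add: field_simps power2_eq_square)
    also have "\<dots> \<le> 1 / (2 * w\<^sup>2 * CFL\<^sup>2)"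
    proof -
      have "e\<^sup>2 \<le> 1" using e by (simp add: power_le_one)
      then show ?thesis using w0 CFL by (intro divide_right_mono) auto
    qed
    also have "\<dots> \<le> 1 / (2 * (1 - e0)\<^sup>2 * CFL\<^sup>2)"
    proof -
      have "(1 - e0)\<^sup>2 \<le> w\<^sup>2" using e unfolding w_def by (intro power_mono) auto
      moreover have "0 < (1 - e0)\<^sup>2" using e by simp
      ultimately show ?thesis using CFL by (intro divide_left_mono mult_right_mono mult_pos_pos) auto
    qed
    finally show ?thesis .
  qed
  have "D + S \<le> D * (1 + 1 / (2 * (1 - e0)\<^sup>2 * CFL\<^sup>2))"
    using S1 mult_left_mono[OF R2 nn(4)] by (simp add: algebra_simps)
  also have "\<dots> \<le> (2 * (2 * Fc\<^sup>2 + Hc\<^sup>2) / (CFL\<^sup>2 * (1 - e0) ^ 4) * (e\<^sup>2 * dt)\<^sup>2) * (1 + 1 / (2 * (1 - e0)\<^sup>2 * CFL\<^sup>2))"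
    using D2 CFL by (intro mult_right_mono) auto
  finally show ?thesis by (simp add: algebra_simps)
qed


lemma aform_IP:
  assumes "L2 w" "L2 dw" "L2 \<phi>" "L2 d\<phi>"
  shows "a_form \<epsilon> dt w dw \<phi> d\<phi> = gamma_coef \<epsilon> dt * IP dw d\<phi> + IP w \<phi>"
proof -
  have i1: "set_integrable lborel {0..1} (\<lambda>x. gamma_coef \<epsilon> dt * (dw x * d\<phi> x))"
    using L2_prod[OF assms(2,4)] by (rule set_integrable_mult_right)
  have i2: "set_integrable lborel {0..1} (\<lambda>x. w x * \<phi> x)" by (rule L2_prod[OF assms(1,3)])
  have "a_form \<epsilon> dt w dw \<phi> d\<phi> = (LINT x:{0..1}|lborel. gamma_coef \<epsilon> dt * (dw x * d\<phi> x) + w x * \<phi> x)"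
    unfolding a_form_def by (simp add: mult.assoc)
  also have "\<dots> = (LINT x:{0..1}|lborel. gamma_coef \<epsilon> dt * (dw x * d\<phi> x)) + (LINT x:{0..1}|lborel. w x * \<phi> x)"
    by (rule set_integral_add(2)[OF i1 i2])
  also have "\<dots> = gamma_coef \<epsilon> dt * IP dw d\<phi> + IP w \<phi>"
    unfolding IP_def using L2_HK(2)[OF assms(2,4)] L2_HK(2)[OF assms(1,3)] by simp
  finally show ?thesis .
qed

lemma iota_IP:
  assumes "L2 (iota1 V U dx dt n)" "L2 (iota2 V U g \<epsilon> dx dt n)" "L2 \<phi>" "L2 d\<phi>"
  shows "iota_h V U g \<epsilon> dx dt n \<phi> d\<phi> = IP (iota1 V U dx dt n) \<phi> - dt\<^sup>2 * (1 - \<epsilon>) * IP (iota2 V U g \<epsilon> dx dt n) d\<phi>"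
proof -
  have i1: "set_integrable lborel {0..1} (\<lambda>x. iota1 V U dx dt n x * \<phi> x)" by (rule L2_prod[OF assms(1,3)])
  have i2: "set_integrable lborel {0..1} (\<lambda>x. dt\<^sup>2 * (1 - \<epsilon>) * (iota2 V U g \<epsilon> dx dt n x * d\<phi> x))"
    using L2_prod[OF assms(2,4)] by (rule set_integrable_mult_right)
  have "iota_h V U g \<epsilon> dx dt n \<phi> d\<phi> = (LINT x:{0..1}|lborel. iota1 V U dx dt n x * \<phi> x - dt\<^sup>2 * (1 - \<epsilon>) * (iota2 V U g \<epsilon> dx dt n x * d\<phi> x))"
    unfolding iota_h_def by (simp add: mult.assoc)
  also have "\<dots> = (LINT x:{0..1}|lborel. iota1 V U dx dt n x * \<phi> x) - (LINT x:{0..1}|lborel. dt\<^sup>2 * (1 - \<epsilon>) * (iota2 V U g \<epsilon> dx dt n x * d\<phi> x))"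
    by (rule set_integral_diff(2)[OF i1 i2])
  also have "\<dots> = IP (iota1 V U dx dt n) \<phi> - dt\<^sup>2 * (1 - \<epsilon>) * IP (iota2 V U g \<epsilon> dx dt n) d\<phi>"
    unfolding IP_def using L2_HK(2)[OF assms(1,3)] L2_HK(2)[OF assms(2,4)] by simp
  finally show ?thesis .
qed

lemma IP_const_bound:
  assumes "L2 f" "\<And>x. x \<in> {0..1} \<Longrightarrow> \<bar>f x\<bar> \<le> B"
  shows "IP f f \<le> B\<^sup>2"
proof -
  have "IP f f \<le> integral {0..1::real} (\<lambda>x. B\<^sup>2)"
    unfolding IP_def
  proof (rule integral_le[OF L2_HK(1)[OF assms(1,1)]])
    fix x :: real assume x: "x \<in> {0..1}"
    have "\<bar>f x\<bar>\<^sup>2 \<le> B\<^sup>2" using assms(2)[OF x] by (intro power_mono) auto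
    then show "f x * f x \<le> B\<^sup>2" by (simp add: power2_eq_square)
  qed auto
  then show ?thesis by simp
qed


lemma iota1_meas: "set_borel_measurable lborel {0..1} (iota1 V U dx dt n)"
proof -
  define G where "G i = V (xbar dx i) (real n * dt) + dt * tilde_ux V U dx dt n i" for i
  have "iota1 V U dx dt n = (\<lambda>x. G \<lfloor>x / dx\<rfloor>)"
    by (auto simp: iota1_def G_def cell_def Let_def)
  moreover have "(\<lambda>x. G \<lfloor>x / dx\<rfloor>) \<in> borel_measurable borel" by measurable
  ultimately show ?thesis by (simp add: sbm_global)
qed

lemma iota2_meas: "set_borel_measurable lborel {0..1} (iota2 V U g \<epsilon> dx dt n)"
proof -
  define G where "G i = g (xbar dx i) (real n * dt) + tilde_vx V U dx dt n i / \<epsilon>" for i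
  have "iota2 V U g \<epsilon> dx dt n = (\<lambda>x. G \<lfloor>x / dx\<rfloor>)"
    by (auto simp: iota2_def G_def cell_def Let_def)
  moreover have "(\<lambda>x. G \<lfloor>x / dx\<rfloor>) \<in> borel_measurable borel" by measurable
  ultimately show ?thesis by (simp add: sbm_global)
qed

lemma iota2_step:
  assumes N: "0 < N" and t: "t \<in> {0..1}"
  shows "iota2 V U g \<epsilon> (1 / real N) dt n t
     = (\<lambda>k. g (xbar (1 / real N) (int k)) (real n * dt) + tilde_vx V U (1 / real N) dt n (int k) / \<epsilon>) (kidx N t)"
proof -
  have "cell (1 / real N) t = \<lfloor>real N * t\<rfloor>" by (simp add: cell_def mult.commute)
  moreover have "0 \<le> \<lfloor>real N * t\<rfloor>" using t by simp
  ultimately have "cell (1 / real N) t = int (kidx N t)" by (simp add: kidx_def)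
  then show ?thesis by (simp add: iota2_def Let_def)
qed

lemma main_inner:
  fixes V U g :: "real \<Rightarrow> real \<Rightarrow> real" and vb dvb vh dvh :: "real \<Rightarrow> real"
  assumes eps: "0 < \<epsilon>" "\<epsilon> \<le> \<epsilon>0" "\<epsilon>0 < 1" and CFL: "0 < CFL" "CFL < 1" and N: "0 < N"
    and edt: "\<epsilon> \<le> CFL * (1 / real N)" and A: "0 \<le> Av" "0 \<le> Au"
    and Vb: "\<And>x t. 0 \<le> t \<Longrightarrow> \<bar>V x t\<bar> \<le> Av * \<epsilon>\<^sup>2"
    and Ud: "\<And>a b t. 0 \<le> t \<Longrightarrow> \<bar>U a t - U b t\<bar> \<le> Au * \<epsilon>\<^sup>2 * \<bar>a - b\<bar>"
    and gb: "\<And>x t. 0 \<le> t \<Longrightarrow> \<bar>g x t\<bar> \<le> Bg"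
    and Hb: "H01_pair vb dvb"
    and E1: "\<forall>\<phi> d\<phi>. H01_pair \<phi> d\<phi> \<longrightarrow>
         a_form \<epsilon> (CFL * (1 / real N)) vb dvb \<phi> d\<phi> = iota_h V U g \<epsilon> (1 / real N) (CFL * (1 / real N)) n \<phi> d\<phi>"
    and Vhh: "Vh N vh" and Hh: "H01_pair vh dvh"
    and E2: "\<forall>\<phi> d\<phi>. Vh N \<phi> \<and> H01_pair \<phi> d\<phi> \<longrightarrow>
         a_form \<epsilon> (CFL * (1 / real N)) vh dvh \<phi> d\<phi> = iota_h V U g \<epsilon> (1 / real N) (CFL * (1 / real N)) n \<phi> d\<phi>"
  shows "H01_norm (\<lambda>x. dvb x - dvh x) \<le>
    sqrt (2 * (2 * (3 * Av + Au)\<^sup>2 + (Bg + Av + Au / CFL)\<^sup>2) / (CFL\<^sup>2 * (1 - \<epsilon>0) ^ 4) * (1 + 1 / (2 * (1 - \<epsilon>0)\<^sup>2 * CFL\<^sup>2)))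
    * (\<epsilon> ^ 6 / (1 / real N) ^ 3 + \<epsilon> ^ 4 / (1 / real N) + \<epsilon>\<^sup>2 * (CFL * (1 / real N)))"
proof -
  define dx where "dx = 1 / real N"
  define dt where "dt = CFL * dx"
  define Fc where "Fc = 3 * Av + Au"
  define Hc where "Hc = Bg + Av + Au / CFL"
  define AA where "AA = 2 * (2 * Fc\<^sup>2 + Hc\<^sup>2) / (CFL\<^sup>2 * (1 - \<epsilon>0) ^ 4) * (1 + 1 / (2 * (1 - \<epsilon>0)\<^sup>2 * CFL\<^sup>2))"
  have dx: "0 < dx" "dx \<le> 1" using N by (auto simp: dx_def)
  have dt: "0 < dt" "dt \<le> 1" "dt = CFL * dx" using dx CFL by (auto simp: dt_def intro: mult_le_one)
  have edt': "\<epsilon> \<le> dt" using edt by (simp add: dt_def dx_def)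
  have e1: "\<epsilon> \<le> 1" using eps by simp
  have T: "0 \<le> real n * dt" using dt by simp
  define f where "f = iota1 V U dx dt n"
  define h where "h = iota2 V U g \<epsilon> dx dt n"
  note ib = iota_bounds[where V=V and U=U and g=g and n=n and Bg=Bg, OF dx(1) dt CFL eps(1) edt' e1 A Vb[OF T] Ud[OF T] gb[OF T]]
  have fb: "\<bar>f x\<bar> \<le> Fc * \<epsilon>\<^sup>2" for x using ib(1)[of x] by (simp add: f_def Fc_def algebra_simps)
  have hb: "\<bar>h x\<bar> \<le> Hc" for x using ib(2)[of x] by (simp add: h_def Hc_def)
  have Lf: "L2 f" unfolding f_def by (rule L2_bounded[OF iota1_meas]) (use fb in \<open>auto simp: f_def\<close>)
  have Lh: "L2 h" unfolding h_def by (rule L2_bounded[OF iota2_meas]) (use hb in \<open>auto simp: h_def\<close>)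
  define \<gamma> where "\<gamma> = gamma_coef \<epsilon> dt"
  define \<beta> where "\<beta> = dt\<^sup>2 * (1 - \<epsilon>)"
  have gp: "0 < \<gamma>"
  proof -
    have "0 < 1 - \<epsilon>" using eps by simp
    then show ?thesis unfolding \<gamma>_def gamma_coef_def using dt eps by (intro divide_pos_pos mult_pos_pos) auto
  qed
  have E1': "\<gamma> * IP dvb d\<phi> + IP vb \<phi> = IP f \<phi> - \<beta> * IP h d\<phi>" if H: "H01_pair \<phi> d\<phi>" for \<phi> d\<phi>
  proof -
    have "a_form \<epsilon> dt vb dvb \<phi> d\<phi> = iota_h V U g \<epsilon> dx dt n \<phi> d\<phi>"
      using E1 H unfolding dt_def dx_def by blast
    then show ?thesis
      using aform_IP[OF H01_facts(4)[OF Hb] H01_facts(1)[OF Hb] H01_facts(4)[OF H] H01_facts(1)[OF H], of \<epsilon> dt]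
        iota_IP[OF Lf[unfolded f_def] Lh[unfolded h_def] H01_facts(4)[OF H] H01_facts(1)[OF H]]
      unfolding \<gamma>_def \<beta>_def f_def h_def by simp
  qed
  have E2': "\<gamma> * IP dvh d\<phi> + IP vh \<phi> = IP f \<phi> - \<beta> * IP h d\<phi>" if V: "Vh N \<phi>" and H: "H01_pair \<phi> d\<phi>" for \<phi> d\<phi>
  proof -
    have "a_form \<epsilon> dt vh dvh \<phi> d\<phi> = iota_h V U g \<epsilon> dx dt n \<phi> d\<phi>"
      using E2 V H unfolding dt_def dx_def by blast
    then show ?thesis
      using aform_IP[OF H01_facts(4)[OF Hh] H01_facts(1)[OF Hh] H01_facts(4)[OF H] H01_facts(1)[OF H], of \<epsilon> dt]
        iota_IP[OF Lf[unfolded f_def] Lh[unfolded h_def] H01_facts(4)[OF H] H01_facts(1)[OF H]]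
      unfolding \<gamma>_def \<beta>_def f_def h_def by simp
  qed
  have hstep: "h t = (\<lambda>k. g (xbar dx (int k)) (real n * dt) + tilde_vx V U dx dt n (int k) / \<epsilon>) (kidx N t)"
    if "t \<in> {0..1}" for t
    unfolding h_def dx_def using iota2_step[OF N that] .
  obtain Q P Y D T S where QP: "0 \<le> Q" "0 \<le> P" "0 \<le> Y" "0 \<le> D" "0 \<le> T" "0 \<le> S"
     "\<gamma> * Q + P \<le> (IP f f + P) / 2 + \<beta>\<^sup>2 / (2 * \<gamma>) * IP h h + \<gamma> / 2 * Q"
     "\<gamma> * D \<le> (IP f f + P) / (\<gamma> * (real N)\<^sup>2) + \<gamma> * (real N)\<^sup>2 * Y / 2"
     "Y \<le> (1 / real N)\<^sup>2 * D" "\<gamma> * S + T \<le> (Y + T) / 2"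
     "IP (\<lambda>x. dvb x - dvh x) (\<lambda>x. dvb x - dvh x) = D + S"
    using galerkin_core[OF N gp Lf hstep Hb Hh Vhh E1' E2'] by blast
  have F2: "IP f f \<le> (Fc * \<epsilon>\<^sup>2)\<^sup>2" by (rule IP_const_bound[OF Lf]) (use fb in auto)
  have H2: "IP h h \<le> Hc\<^sup>2" by (rule IP_const_bound[OF Lh]) (use hb in auto)
  have DS: "D + S \<le> AA * (\<epsilon>\<^sup>2 * dt)\<^sup>2"
    unfolding AA_def
  proof (rule final_arith[OF eps(1,2,3) edt' dt(2) CFL(1) _ _ _ _ QP(1-6) IP_nonneg[OF Lf] IP_nonneg[OF Lh] QP(7-10) F2 H2])
    show "0 < real N" using N by simp
    show "dt = CFL * (1 / real N)" by (simp add: dt_def dx_def)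
    show "\<gamma> = dt\<^sup>2 * (1 - \<epsilon>)\<^sup>2 / \<epsilon>\<^sup>2" by (simp add: \<gamma>_def gamma_coef_def)
    show "\<beta> = dt\<^sup>2 * (1 - \<epsilon>)" by (simp add: \<beta>_def)
  qed
  have "H01_norm (\<lambda>x. dvb x - dvh x) = sqrt (IP (\<lambda>x. dvb x - dvh x) (\<lambda>x. dvb x - dvh x))"
  proof -
    have L: "L2 (\<lambda>x. dvb x - dvh x)" by (rule L2_diff[OF H01_facts(1)[OF Hb] H01_facts(1)[OF Hh]])
    show ?thesis unfolding H01_norm_def IP_def using L2_HK(2)[OF L L] by (simp add: power2_eq_square)
  qed
  also have "\<dots> = sqrt (D + S)" using QP(11) by simp
  also have "\<dots> \<le> sqrt (AA * (\<epsilon>\<^sup>2 * dt)\<^sup>2)" using DS by simp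
  also have "\<dots> = sqrt AA * (\<epsilon>\<^sup>2 * dt)" using dt eps by (simp add: real_sqrt_mult)
  also have "\<dots> \<le> sqrt AA * (\<epsilon> ^ 6 / dx ^ 3 + \<epsilon> ^ 4 / dx + \<epsilon>\<^sup>2 * dt)"
  proof (rule mult_left_mono)
    have e0: "0 < 1 - \<epsilon>0" using eps by simp
    have p1: "0 \<le> 2 * (2 * Fc\<^sup>2 + Hc\<^sup>2)" by simp
    have p2: "0 < CFL\<^sup>2 * (1 - \<epsilon>0) ^ 4" using e0 CFL by simp
    have p3: "0 < 2 * (1 - \<epsilon>0)\<^sup>2 * CFL\<^sup>2" using e0 CFL by simp
    have p4: "0 \<le> 1 + 1 / (2 * (1 - \<epsilon>0)\<^sup>2 * CFL\<^sup>2)" using p3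
      by (metis add_nonneg_nonneg less_eq_real_def zero_le_divide_1_iff zero_le_one)
    have "0 \<le> AA" unfolding AA_def
      by (rule mult_nonneg_nonneg[OF divide_nonneg_pos[OF p1 p2] p4])
    then show "0 \<le> sqrt AA" by simp
    have a: "0 \<le> \<epsilon> ^ 6 / dx ^ 3" using dx(1) eps(1) by simp
    have b: "0 \<le> \<epsilon> ^ 4 / dx" using dx(1) eps(1) by simp
    show "\<epsilon>\<^sup>2 * dt \<le> \<epsilon> ^ 6 / dx ^ 3 + \<epsilon> ^ 4 / dx + \<epsilon>\<^sup>2 * dt" using a b by linarith
  qed
  finally show ?thesis unfolding AA_def Fc_def Hc_def dt_def dx_def .
qed


theorem corollary3:
  fixes \<epsilon>0 CFL :: real
    and v u :: "real \<Rightarrow> real \<Rightarrow> real \<Rightarrow> real"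
    and g v2 u2 :: "real \<Rightarrow> real \<Rightarrow> real"
  assumes eps0: "\<epsilon>0 < 1"
    and CFL: "0 < CFL" "CFL < 1"
    and smooth_uv: "\<forall>\<epsilon>. 0 < \<epsilon> \<and> \<epsilon> \<le> \<epsilon>0 \<longrightarrow> smooth2 (v \<epsilon>) \<and> smooth2 (u \<epsilon>)"
    and smooth_v2: "bounded_smooth2 v2"
    and smooth_u2: "smooth2 u2" "bounded_smooth2 (partial_x u2)"
    and smooth_g: "bounded_smooth2 g"
    and pde: "\<forall>\<epsilon>. 0 < \<epsilon> \<and> \<epsilon> \<le> \<epsilon>0 \<longrightarrow> (\<forall>x\<in>{0..1}. \<forall>t\<ge>0.
               partial_t (v \<epsilon>) x t - partial_x (u \<epsilon>) x t = 0 \<and>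
               partial_t (u \<epsilon>) x t - partial_x (v \<epsilon>) x t / \<epsilon>\<^sup>2 = g x t)"
    and bc: "\<forall>\<epsilon>. 0 < \<epsilon> \<and> \<epsilon> \<le> \<epsilon>0 \<longrightarrow> (\<forall>t\<ge>0. v \<epsilon> 0 t = 0 \<and> v \<epsilon> 1 t = 0)"
    and A1: "\<exists>K. \<forall>\<epsilon>. 0 < \<epsilon> \<and> \<epsilon> \<le> \<epsilon>0 \<longrightarrow>
               C1_norm_le (\<lambda>x t. v \<epsilon> x t - \<epsilon>\<^sup>2 * v2 x t) (K * \<epsilon> ^ 3) \<and>
               C1_norm_le (\<lambda>x t. partial_x (u \<epsilon>) x t - \<epsilon>\<^sup>2 * partial_x u2 x t) (K * \<epsilon> ^ 3)"
  shows "\<exists>C. \<forall>\<epsilon> (N::nat) (n::nat) vb dvb vh dvh.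
    (let dx = 1 / real N; dt = CFL * dx in
      0 < \<epsilon> \<and> \<epsilon> \<le> \<epsilon>0 \<and> 0 < N \<and> \<epsilon> \<le> dt \<and>
      H01_pair vb dvb \<and>
      (\<forall>\<phi> d\<phi>. H01_pair \<phi> d\<phi> \<longrightarrow>
         a_form \<epsilon> dt vb dvb \<phi> d\<phi> = iota_h (v \<epsilon>) (u \<epsilon>) g \<epsilon> dx dt n \<phi> d\<phi>) \<and>
      Vh N vh \<and> H01_pair vh dvh \<and>
      (\<forall>\<phi> d\<phi>. Vh N \<phi> \<and> H01_pair \<phi> d\<phi> \<longrightarrow>
         a_form \<epsilon> dt vh dvh \<phi> d\<phi> = iota_h (v \<epsilon>) (u \<epsilon>) g \<epsilon> dx dt n \<phi> d\<phi>)
      \<longrightarrow> H01_norm (\<lambda>x. dvb x - dvh x) \<le> C * (\<epsilon> ^ 6 / dx ^ 3 + \<epsilon> ^ 4 / dx + \<epsilon>\<^sup>2 * dt))"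
proof -
  obtain K where K: "\<And>\<epsilon>. 0 < \<epsilon> \<Longrightarrow> \<epsilon> \<le> \<epsilon>0 \<Longrightarrow>
      C1_norm_le (\<lambda>x t. v \<epsilon> x t - \<epsilon>\<^sup>2 * v2 x t) (K * \<epsilon> ^ 3) \<and>
      C1_norm_le (\<lambda>x t. partial_x (u \<epsilon>) x t - \<epsilon>\<^sup>2 * partial_x u2 x t) (K * \<epsilon> ^ 3)"
    using A1 by blast
  have bs0: "\<exists>B. \<forall>x. \<forall>t\<ge>0. \<bar>F x t\<bar> \<le> B" if "bounded_smooth2 F" for F
  proof -
    from that have "\<exists>B. \<forall>x. \<forall>t\<ge>0. \<bar>((partial_x ^^ 0) ((partial_t ^^ 0) F)) x t\<bar> \<le> B"
      unfolding bounded_smooth2_def by blast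
    then show ?thesis by simp
  qed
  obtain Bv where Bv: "\<And>x t. 0 \<le> t \<Longrightarrow> \<bar>v2 x t\<bar> \<le> Bv" using bs0[OF smooth_v2] by blast
  obtain Bu where Bu: "\<And>x t. 0 \<le> t \<Longrightarrow> \<bar>partial_x u2 x t\<bar> \<le> Bu" using bs0[OF smooth_u2(2)] by blast
  obtain Bg where Bg: "\<And>x t. 0 \<le> t \<Longrightarrow> \<bar>g x t\<bar> \<le> Bg" using bs0[OF smooth_g] by blast
  define K' where "K' = max K 0"
  define Av where "Av = max Bv 0 + K'"
  define Au where "Au = max Bu 0 + K'"
  define Bg' where "Bg' = max Bg 0"
  have A: "0 \<le> Av" "0 \<le> Au" by (auto simp: Av_def Au_def K'_def)
  have Kb: "K * \<epsilon> ^ 3 \<le> K' * \<epsilon>\<^sup>2" if "0 < \<epsilon>" "\<epsilon> \<le> 1" for \<epsilon> :: real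
  proof -
    have "\<epsilon> ^ 3 \<le> \<epsilon>\<^sup>2" using that by (simp add: power_decreasing)
    then have "K' * \<epsilon> ^ 3 \<le> K' * \<epsilon>\<^sup>2" by (intro mult_left_mono) (auto simp: K'_def)
    moreover have "K * \<epsilon> ^ 3 \<le> K' * \<epsilon> ^ 3" using that by (intro mult_right_mono) (auto simp: K'_def)
    ultimately show ?thesis by linarith
  qed
  have Vb: "\<bar>v \<epsilon> x t\<bar> \<le> Av * \<epsilon>\<^sup>2" if e: "0 < \<epsilon>" "\<epsilon> \<le> \<epsilon>0" and t: "0 \<le> t" for \<epsilon> x t
  proof -
    have "\<bar>v \<epsilon> x t - \<epsilon>\<^sup>2 * v2 x t\<bar> \<le> K * \<epsilon> ^ 3"
      using C1_le_bound[OF conjunct1[OF K[OF e]] t] by simp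
    moreover have "\<bar>\<epsilon>\<^sup>2 * v2 x t\<bar> \<le> \<epsilon>\<^sup>2 * max Bv 0"
      using Bv[OF t, of x] by (simp add: abs_mult mult_left_mono)
    moreover have "K * \<epsilon> ^ 3 \<le> K' * \<epsilon>\<^sup>2" using Kb e eps0 by simp
    moreover have "\<bar>v \<epsilon> x t\<bar> \<le> \<bar>v \<epsilon> x t - \<epsilon>\<^sup>2 * v2 x t\<bar> + \<bar>\<epsilon>\<^sup>2 * v2 x t\<bar>"
      using abs_triangle_ineq[of "v \<epsilon> x t - \<epsilon>\<^sup>2 * v2 x t" "\<epsilon>\<^sup>2 * v2 x t"] by simp
    moreover have "Av * \<epsilon>\<^sup>2 = \<epsilon>\<^sup>2 * max Bv 0 + K' * \<epsilon>\<^sup>2" by (simp add: Av_def algebra_simps)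
    ultimately show ?thesis by linarith
  qed
  have Ud: "\<bar>u \<epsilon> a t - u \<epsilon> b t\<bar> \<le> Au * \<epsilon>\<^sup>2 * \<bar>a - b\<bar>" if e: "0 < \<epsilon>" "\<epsilon> \<le> \<epsilon>0" and t: "0 \<le> t" for \<epsilon> a b t
  proof (rule lipschitz_deriv)
    have S2: "smooth2 (u \<epsilon>)" using smooth_uv e by blast
    have "let h = (partial_x ^^ 0) ((partial_t ^^ 0) (u \<epsilon>)) in
      (\<forall>x t. (\<lambda>y. h y t) differentiable (at x) \<and> (\<lambda>s. h x s) differentiable (at t)) \<and>
      continuous_on UNIV (\<lambda>p. h (fst p) (snd p))"
      using spec[OF spec[OF S2[unfolded smooth2_def]], of 0 0] by simp
    then show "(\<lambda>y. u \<epsilon> y t) differentiable (at x)" for x by (simp add: Let_def)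
    fix x
    have "\<bar>partial_x (u \<epsilon>) x t - \<epsilon>\<^sup>2 * partial_x u2 x t\<bar> \<le> K * \<epsilon> ^ 3"
      using C1_le_bound[OF conjunct2[OF K[OF e]] t] by simp
    moreover have "\<bar>\<epsilon>\<^sup>2 * partial_x u2 x t\<bar> \<le> \<epsilon>\<^sup>2 * max Bu 0"
      using Bu[OF t, of x] by (simp add: abs_mult mult_left_mono)
    moreover have "K * \<epsilon> ^ 3 \<le> K' * \<epsilon>\<^sup>2" using Kb e eps0 by simp
    moreover have "\<bar>partial_x (u \<epsilon>) x t\<bar> \<le> \<bar>partial_x (u \<epsilon>) x t - \<epsilon>\<^sup>2 * partial_x u2 x t\<bar> + \<bar>\<epsilon>\<^sup>2 * partial_x u2 x t\<bar>"
      using abs_triangle_ineq[of "partial_x (u \<epsilon>) x t - \<epsilon>\<^sup>2 * partial_x u2 x t" "\<epsilon>\<^sup>2 * partial_x u2 x t"] by simp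
    moreover have "Au * \<epsilon>\<^sup>2 = \<epsilon>\<^sup>2 * max Bu 0 + K' * \<epsilon>\<^sup>2" by (simp add: Au_def algebra_simps)
    ultimately have "\<bar>partial_x (u \<epsilon>) x t\<bar> \<le> Au * \<epsilon>\<^sup>2" by linarith
    then show "\<bar>deriv (\<lambda>y. u \<epsilon> y t) x\<bar> \<le> Au * \<epsilon>\<^sup>2" by (simp add: partial_x_def)
  qed
  have gb: "\<bar>g x t\<bar> \<le> Bg'" if "0 \<le> t" for x t using Bg[OF that, of x] by (simp add: Bg'_def)
  show ?thesis
  proof (rule exI, intro allI, unfold Let_def, intro impI, elim conjE)
    fix \<epsilon> N n vb dvb vh dvh
    assume e: "0 < \<epsilon>" "\<epsilon> \<le> \<epsilon>0" and N: "0 < N" and edt: "\<epsilon> \<le> CFL * (1 / real N)"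
      and Hb: "H01_pair vb dvb"
      and E1: "\<forall>\<phi> d\<phi>. H01_pair \<phi> d\<phi> \<longrightarrow>
         a_form \<epsilon> (CFL * (1 / real N)) vb dvb \<phi> d\<phi> = iota_h (v \<epsilon>) (u \<epsilon>) g \<epsilon> (1 / real N) (CFL * (1 / real N)) n \<phi> d\<phi>"
      and Vhh: "Vh N vh" and Hh: "H01_pair vh dvh"
      and E2: "\<forall>\<phi> d\<phi>. Vh N \<phi> \<and> H01_pair \<phi> d\<phi> \<longrightarrow>
         a_form \<epsilon> (CFL * (1 / real N)) vh dvh \<phi> d\<phi> = iota_h (v \<epsilon>) (u \<epsilon>) g \<epsilon> (1 / real N) (CFL * (1 / real N)) n \<phi> d\<phi>"
    show "H01_norm (\<lambda>x. dvb x - dvh x) \<le>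
        sqrt (2 * (2 * (3 * Av + Au)\<^sup>2 + (Bg' + Av + Au / CFL)\<^sup>2) / (CFL\<^sup>2 * (1 - \<epsilon>0) ^ 4) * (1 + 1 / (2 * (1 - \<epsilon>0)\<^sup>2 * CFL\<^sup>2)))
        * (\<epsilon> ^ 6 / (1 / real N) ^ 3 + \<epsilon> ^ 4 / (1 / real N) + \<epsilon>\<^sup>2 * (CFL * (1 / real N)))"
      by (rule main_inner[OF e eps0 CFL N edt A Vb[OF e] Ud[OF e] gb Hb E1 Vhh Hh E2])
  qed
qed


end
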